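(* Let $p\ge1$, $\boldsymbol M=(M_t)_{t\in[0,T]}\in C_T(\mathcal{P}(\mathcal{P}(\mathbb{R}^d)))$, and $b:[0,T]\times\mathbb{R}^d\times\mathcal{P}(\mathbb{R}^d)\to\mathbb{R}^d$ Borel with $\int_0^T\int\int|b(t,x,\mu)|^pd\mu(x)dM_t(\mu)dt<+\infty$, such that for every $F\in\operatorname{Cyl}^1_c(\mathcal{P}(\mathbb{R}^d))$, $\frac{d}{dt}\int F\,dM_t=\int\int\nabla_WF(x,\mu)\cdot b(t,x,\mu)\,d\mu(x)\,dM_t(\mu)$ in $\mathscr D'(0,T)$. Then: (i) if $M_0$ is concentrated on $\mathcal{P}_p(\mathbb{R}^d)$, then $M_t$ is concentrated on $\mathcal{P}_p(\mathbb{R}^d)$ for all $t\in[0,T]$; (ii) if $M_0\in\mathcal{P}_p(\mathcal{P}_p(\mathbb{R}^d))$, then $M_t\in\mathcal{P}_p(\mathcal{P}_p(\mathbb{R}^d))$ for all $t\in[0,T]$.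
   Context: Cylinder functions: $F(\mu)=\Psi(\int\phi_1d\mu,\dots,\int\phi_kd\mu)$ with $\phi_i\in C^1_c(\mathbb{R}^d)$, $\Psi\in C^1_b(\mathbb{R}^k)$; $\nabla_WF(x,\mu)=\sum_i\partial_i\Psi(\int\phi_1d\mu,\dots)\nabla\phi_i(x)$. $\mathcal P_p(\mathbb R^d)$: probability measures with finite $p$-th moment; $\mathcal P_p(\mathcal P_p(\mathbb R^d))$: $M$ concentrated on $\mathcal P_p(\mathbb R^d)$ with $\int\int|x|^pd\mu\,dM(\mu)<\infty$. *)

theory Defs
  imports "HOL-Analysis.Analysis" "HOL-Probability.Probability"
begin

text \<open>Probability measures on R^d (Giry sigma-algebra = Borel sigma-algebra of the narrow topology).\<close>
abbreviation Pd :: "'a::euclidean_space measure set" where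
  "Pd \<equiv> space (prob_algebra (borel :: 'a measure))"

definition pmom :: "real \<Rightarrow> 'a::euclidean_space measure \<Rightarrow> ennreal" where
  "pmom p \<mu> = (\<integral>\<^sup>+ x. ennreal (norm x powr p) \<partial>\<mu>)"

definition narrow_conv :: "(nat \<Rightarrow> 'a::euclidean_space measure) \<Rightarrow> 'a measure \<Rightarrow> bool" where
  "narrow_conv \<mu>s \<mu> \<longleftrightarrow>
     (\<forall>f :: 'a \<Rightarrow> real. continuous_on UNIV f \<and> bounded (range f) \<longrightarrow>
        (\<lambda>n. \<integral>x. f x \<partial>(\<mu>s n)) \<longlonglongrightarrow> (\<integral>x. f x \<partial>\<mu>))"

text \<open>Continuity of a real function on P(R^d) with respect to the narrow topology
  (sequential; the narrow topology on P(R^d) is metrizable).\<close>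
definition narrow_continuous :: "('a::euclidean_space measure \<Rightarrow> real) \<Rightarrow> bool" where
  "narrow_continuous \<Phi> \<longleftrightarrow>
     (\<forall>\<mu>s \<mu>. (\<forall>n. \<mu>s n \<in> Pd) \<and> \<mu> \<in> Pd \<and> narrow_conv \<mu>s \<mu> \<longrightarrow>
        (\<lambda>n. \<Phi> (\<mu>s n)) \<longlonglongrightarrow> \<Phi> \<mu>)"

definition narrow_curve :: "real \<Rightarrow> (real \<Rightarrow> 'a::euclidean_space measure measure) \<Rightarrow> bool" where
  "narrow_curve T M \<longleftrightarrow>
     (\<forall>t\<in>{0..T}. M t \<in> space (prob_algebra (prob_algebra (borel :: 'a measure)))) \<and>
     (\<forall>t\<in>{0..T}. \<forall>ts. (\<forall>n. ts n \<in> {0..T}) \<and> ts \<longlonglongrightarrow> t \<longrightarrow>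
        (\<forall>\<Phi> :: 'a measure \<Rightarrow> real.
           \<Phi> \<in> borel_measurable (prob_algebra borel) \<and> bounded (\<Phi> ` Pd) \<and> narrow_continuous \<Phi> \<longrightarrow>
           (\<lambda>n. \<integral>\<mu>. \<Phi> \<mu> \<partial>(M (ts n))) \<longlonglongrightarrow> (\<integral>\<mu>. \<Phi> \<mu> \<partial>(M t))))"

definition C1c_grad :: "('a::euclidean_space \<Rightarrow> real) \<Rightarrow> ('a \<Rightarrow> 'a) \<Rightarrow> bool" where
  "C1c_grad \<phi> g \<longleftrightarrow>
     (\<forall>x. (\<phi> has_derivative (\<lambda>h. g x \<bullet> h)) (at x)) \<and> continuous_on UNIV g \<and>
     compact (closure {x. \<phi> x \<noteq> 0})"

text \<open>Psi in C^1_b(R^k), R^k represented by functions nat => real depending only on the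
  first k coordinates; D i is the i-th partial derivative.\<close>
definition C1b_partials :: "nat \<Rightarrow> ((nat \<Rightarrow> real) \<Rightarrow> real) \<Rightarrow> (nat \<Rightarrow> (nat \<Rightarrow> real) \<Rightarrow> real) \<Rightarrow> bool" where
  "C1b_partials k \<Psi> D \<longleftrightarrow>
     (\<forall>y z. (\<forall>i<k. y i = z i) \<longrightarrow> \<Psi> y = \<Psi> z) \<and>
     (\<forall>i<k. \<forall>y z. (\<forall>j<k. y j = z j) \<longrightarrow> D i y = D i z) \<and>
     bounded (range \<Psi>) \<and> (\<forall>i<k. bounded (range (D i))) \<and>
     (\<forall>i<k. \<forall>y. ((\<lambda>s. \<Psi> (y(i := s))) has_real_derivative D i y) (at (y i))) \<and>
     (\<forall>i<k. continuous_on UNIV (D i))"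

definition test_fun :: "real \<Rightarrow> (real \<Rightarrow> real) \<Rightarrow> bool" where
  "test_fun T \<eta> \<longleftrightarrow>
     (\<forall>n x. ((deriv ^^ n) \<eta>) differentiable (at x)) \<and>
     (\<exists>a b. 0 < a \<and> a \<le> b \<and> b < T \<and> (\<forall>t. t \<notin> {a..b} \<longrightarrow> \<eta> t = 0))"

end

theory Submission
  imports Defs "HOL-Computational_Algebra.Polynomial"
begin


definition Cn :: "nat \<Rightarrow> (real \<Rightarrow> real) \<Rightarrow> bool" where
  "Cn n f \<longleftrightarrow> (\<forall>m<n. \<forall>x. (deriv ^^ m) f differentiable (at x))"

lemma Cn_0[simp]: "Cn 0 f" by (simp add: Cn_def)

lemma Cn_Suc: "Cn (Suc n) f \<longleftrightarrow> (\<forall>x. f differentiable (at x)) \<and> Cn n (deriv f)"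
proof -
  have *: "(deriv ^^ Suc m) f = (deriv ^^ m) (deriv f)" for m
    by (simp add: funpow_Suc_right del: funpow.simps)
  show ?thesis unfolding Cn_def
  proof (intro iffI conjI allI impI)
    assume "\<forall>m<Suc n. \<forall>x. (deriv ^^ m) f differentiable at x"
    then show "f differentiable at x" for x by (metis funpow_0 zero_less_Suc)
    fix m x assume "\<forall>m<Suc n. \<forall>x. (deriv ^^ m) f differentiable at x" "m < n"
    then show "(deriv ^^ m) (deriv f) differentiable at x" by (metis * Suc_mono)
  next
    fix m x assume a: "(\<forall>x. f differentiable at x) \<and> (\<forall>m<n. \<forall>x. (deriv ^^ m) (deriv f) differentiable at x)" "m < Suc n"
    show "(deriv ^^ m) f differentiable at x"
    proof (cases m)
      case 0 then show ?thesis using a by simp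
    next
      case (Suc k) then show ?thesis using a * by auto
    qed
  qed
qed

lemma Cn_mono: "Cn (Suc n) f \<Longrightarrow> Cn n f"
  by (simp add: Cn_def)

lemma deriv_fun_eq: "(\<And>x. (f has_real_derivative f' x) (at x)) \<Longrightarrow> deriv f = f'"
  by (rule ext) (simp add: DERIV_imp_deriv)

lemma diff_DERIV: "(\<forall>x. f differentiable (at x)) \<Longrightarrow> (f has_real_derivative deriv f x) (at x)"
  by (simp add: DERIV_deriv_iff_real_differentiable)

lemma Cn_const: "Cn n (\<lambda>x. c)"
proof (induction n arbitrary: c)
  case (Suc n)
  have "deriv (\<lambda>x. c) = (\<lambda>x. 0)" by (rule deriv_fun_eq) auto
  then show ?case using Suc by (simp add: Cn_Suc)
qed simp

lemma Cn_add: "Cn n f \<Longrightarrow> Cn n g \<Longrightarrow> Cn n (\<lambda>x. f x + g x)"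
proof (induction n arbitrary: f g)
  case (Suc n)
  then have df: "\<forall>x. f differentiable (at x)" and dg: "\<forall>x. g differentiable (at x)"
    by (auto simp: Cn_Suc)
  have "deriv (\<lambda>x. f x + g x) = (\<lambda>x. deriv f x + deriv g x)"
    by (rule deriv_fun_eq) (intro DERIV_add diff_DERIV df dg)
  then show ?case using Suc df dg by (auto simp: Cn_Suc)
qed simp

lemma Cn_mult: "Cn n f \<Longrightarrow> Cn n g \<Longrightarrow> Cn n (\<lambda>x. f x * g x)"
proof (induction n arbitrary: f g)
  case (Suc n)
  then have df: "\<forall>x. f differentiable (at x)" and dg: "\<forall>x. g differentiable (at x)"
    by (auto simp: Cn_Suc)
  have "deriv (\<lambda>x. f x * g x) = (\<lambda>x. deriv f x * g x + f x * deriv g x)"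
    by (rule deriv_fun_eq) (use diff_DERIV[OF df] diff_DERIV[OF dg] in \<open>auto intro!: derivative_eq_intros\<close>)
  moreover have "Cn n (\<lambda>x. deriv f x * g x)" "Cn n (\<lambda>x. f x * deriv g x)"
    using Suc.prems Cn_mono[OF Suc.prems(1)] Cn_mono[OF Suc.prems(2)] by (auto simp: Cn_Suc intro!: Suc.IH)
  ultimately show ?case using Suc df dg
    by (auto simp: Cn_Suc intro!: Cn_add)
qed simp

lemma Cn_inverse: "Cn n f \<Longrightarrow> (\<forall>x. f x \<noteq> 0) \<Longrightarrow> Cn n (\<lambda>x. inverse (f x))"
proof (induction n arbitrary: f)
  case (Suc n)
  then have df: "\<forall>x. f differentiable (at x)" by (auto simp: Cn_Suc)
  have d: "((\<lambda>x. inverse (f x)) has_real_derivative ((- deriv f x) * (inverse (f x) * inverse (f x)))) (at x)" for x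
    using DERIV_inverse_fun[OF diff_DERIV[OF df], of x] Suc.prems(2)
    by (simp add: divide_simps power2_eq_square)
  then have dd: "deriv (\<lambda>x. inverse (f x)) = (\<lambda>x. (- deriv f x) * (inverse (f x) * inverse (f x)))"
    by (rule deriv_fun_eq)
  moreover have "Cn n (\<lambda>x. inverse (f x))" using Suc by (auto dest: Cn_mono)
  moreover have "Cn n (\<lambda>x. - deriv f x)"
    using Cn_mult[OF Cn_const[of n "-1"], of "deriv f"] Suc.prems by (auto simp: Cn_Suc)
  ultimately have "Cn n (deriv (\<lambda>x. inverse (f x)))"
    unfolding dd by (intro Cn_mult) auto
  then show ?case using d
    by (auto simp: Cn_Suc real_differentiable_def)
qed simp

lemma Cn_affine: "Cn n f \<Longrightarrow> Cn n (\<lambda>x. f (a * x + c))"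
proof (induction n arbitrary: f)
  case (Suc n)
  then have df: "\<forall>x. f differentiable (at x)" by (auto simp: Cn_Suc)
  have d: "((\<lambda>x. f (a * x + c)) has_real_derivative (a * deriv f (a * x + c))) (at x)" for x
  proof -
    have "((\<lambda>x. a * x + c) has_real_derivative a) (at x)"
      by (auto intro!: derivative_eq_intros)
    from DERIV_chain2[OF diff_DERIV[OF df] this] show ?thesis by (simp add: mult.commute)
  qed
  then have "deriv (\<lambda>x. f (a * x + c)) = (\<lambda>x. a * deriv f (a * x + c))"
    by (rule deriv_fun_eq)
  moreover have "Cn n (\<lambda>x. deriv f (a * x + c))" using Suc by (auto simp: Cn_Suc)
  ultimately show ?case using d
    by (auto simp: Cn_Suc real_differentiable_def intro!: Cn_mult Cn_const)
qed simp



definition EP :: "real poly \<Rightarrow> real \<Rightarrow> real" where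
  "EP P x = (if x > 0 then poly P (inverse x) * exp (- inverse x) else 0)"

definition QP :: "real poly \<Rightarrow> real poly" where
  "QP P = [:0, 0, 1:] * (P - pderiv P)"

lemma poly_exp_lim: "((\<lambda>y::real. poly P y * y / exp y) \<longlongrightarrow> 0) at_top"
proof -
  have eq: "poly P y * y / exp y = (\<Sum>i\<le>degree P. coeff P i * (y ^ Suc i / exp y))" for y
  proof -
    have "poly P y * y / exp y = (\<Sum>i\<le>degree P. coeff P i * y ^ Suc i) / exp y"
      by (simp add: poly_altdef sum_distrib_left mult_ac)
    also have "\<dots> = (\<Sum>i\<le>degree P. coeff P i * (y ^ Suc i / exp y))"
      by (subst Groups_Big.sum_divide_distrib) simp
    finally show ?thesis .
  qed
  have "((\<lambda>y. \<Sum>i\<le>degree P. coeff P i * (y ^ Suc i / exp y)) \<longlongrightarrow> (\<Sum>i\<le>degree P. coeff P i * 0)) at_top"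
    by (intro tendsto_sum tendsto_mult tendsto_const tendsto_power_div_exp_0)
  then show ?thesis unfolding eq by simp
qed

lemma EP_deriv: "(EP P has_real_derivative EP (QP P) x) (at x)"
proof -
  consider "x > 0" | "x < 0" | "x = 0" by linarith
  then show ?thesis
  proof cases
    case 1
    have di: "(inverse has_real_derivative - (inverse x ^ 2)) (at x)"
      using DERIV_inverse[of x] 1 by (simp add: power2_eq_square)
    have d1: "((\<lambda>x. poly P (inverse x)) has_real_derivative poly (pderiv P) (inverse x) * - (inverse x ^ 2)) (at x)"
      by (rule DERIV_chain2[OF poly_DERIV di])
    have d2: "((\<lambda>x. exp (- inverse x)) has_real_derivative exp (- inverse x) * (inverse x ^ 2)) (at x)"
      using DERIV_chain2[OF DERIV_exp DERIV_minus[OF di]] by simp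
    have e: "EP (QP P) x = (poly P (inverse x) - poly (pderiv P) (inverse x)) * (inverse x)^2 * exp (-inverse x)"
      using 1 by (simp add: EP_def QP_def power2_eq_square)
    have "((\<lambda>x. poly P (inverse x) * exp (- inverse x)) has_real_derivative EP (QP P) x) (at x)"
      unfolding e using DERIV_mult[OF d1 d2] by (simp add: algebra_simps)
    then show ?thesis
      by (rule has_field_derivative_transform_within_open[where S="{0<..}"]) (use 1 in \<open>auto simp: EP_def\<close>)
  next
    case 2
    have "((\<lambda>x. 0) has_real_derivative EP (QP P) x) (at x)"
      using 2 by (auto simp: EP_def)
    then show ?thesis
      by (rule has_field_derivative_transform_within_open[where S="{..<0}"]) (use 2 in \<open>auto simp: EP_def\<close>)
  next
    case 3
    have r: "((\<lambda>h. EP P h / h) \<longlongrightarrow> 0) (at_right 0)"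
    proof -
      have "((\<lambda>y. EP P (inverse y) / inverse y) \<longlongrightarrow> 0) at_top"
      proof (rule Lim_transform_eventually[OF poly_exp_lim[of P]])
        show "\<forall>\<^sub>F y in at_top. poly P y * y / exp y = EP P (inverse y) / inverse y"
          using eventually_gt_at_top[of 0]
          by eventually_elim (simp add: EP_def exp_minus divide_inverse)
      qed
      then have "filterlim (\<lambda>x. (\<lambda>h. EP P h / h) (inverse x)) (nhds 0) at_top" by simp
      then show ?thesis by (rule filterlim_at_right_to_top[THEN iffD2])
    qed
    have l: "((\<lambda>h. EP P h / h) \<longlongrightarrow> 0) (at_left 0)"
    proof (rule Lim_transform_eventually[OF tendsto_const[of 0]])
      show "\<forall>\<^sub>F h in at_left 0. 0 = EP P h / h"
        unfolding eventually_at_left_field by (rule exI[of _ "-1"]) (simp add: EP_def)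
    qed
    have "((\<lambda>h. EP P h / h) \<longlongrightarrow> 0) (at 0)"
      using l r by (rule filterlim_split_at)
    then show ?thesis using 3
      by (simp add: DERIV_def EP_def)
  qed
qed

lemma EP_Cn: "Cn n (EP P)"
proof (induction n arbitrary: P)
  case (Suc n)
  have "deriv (EP P) = EP (QP P)" by (rule deriv_fun_eq) (rule EP_deriv)
  then show ?case using Suc EP_deriv by (auto simp: Cn_Suc real_differentiable_def)
qed simp

definition ee :: "real \<Rightarrow> real" where "ee x = (if x > 0 then exp (- inverse x) else 0)"

lemma ee_EP: "ee = EP 1" by (auto simp: ee_def EP_def fun_eq_iff)

lemma ee_nonneg: "ee x \<ge> 0" by (simp add: ee_def)
lemma ee_pos: "x > 0 \<Longrightarrow> ee x > 0" by (simp add: ee_def)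
lemma ee_mono: "x \<le> y \<Longrightarrow> ee x \<le> ee y"
proof (cases "x > 0")
  case True
  assume xy: "x \<le> y"
  have "inverse y \<le> inverse x" by (rule le_imp_inverse_le) (use True xy in auto)
  then show ?thesis using True xy by (simp add: ee_def)
qed (auto simp: ee_def)

definition Sst :: "real \<Rightarrow> real" where "Sst x = ee x * inverse (ee x + ee (1 - x))"

lemma ee_den_pos: "ee x + ee (1 - x) > 0"
proof (cases "x > 0")
  case True then show ?thesis using ee_pos[of x] ee_nonneg[of "1-x"] by linarith
next
  case False then show ?thesis using ee_pos[of "1-x"] ee_nonneg[of x] by linarith
qed

lemma Sst_Cn: "Cn n Sst"
proof -
  have a: "Cn n ee" by (simp add: ee_EP EP_Cn)
  have b: "Cn n (\<lambda>x. ee ((-1) * x + 1))" by (rule Cn_affine[OF a])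
  have "Cn n (\<lambda>x. ee x + ee ((-1) * x + 1))" by (rule Cn_add[OF a b])
  then have "Cn n (\<lambda>x. inverse (ee x + ee ((-1) * x + 1)))"
  proof (rule Cn_inverse)
    show "\<forall>x. ee x + ee (- 1 * x + 1) \<noteq> 0" using ee_den_pos by (metis add.commute diff_conv_add_uminus less_irrefl mult_minus1)
  qed
  then have "Cn n (\<lambda>x. ee x * inverse (ee x + ee ((-1) * x + 1)))" by (rule Cn_mult[OF a])
  then show ?thesis unfolding Sst_def by simp
qed

lemma Sst_0: "x \<le> 0 \<Longrightarrow> Sst x = 0" by (simp add: Sst_def ee_def)
lemma Sst_1: "x \<ge> 1 \<Longrightarrow> Sst x = 1"
proof -
  assume "x \<ge> 1"
  then have "ee (1 - x) = 0" "ee x > 0" by (auto simp: ee_def)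
  then show ?thesis by (simp add: Sst_def)
qed

lemma Sst_mono: "x \<le> y \<Longrightarrow> Sst x \<le> Sst y"
proof -
  assume xy: "x \<le> y"
  have "ee x * ee (1 - y) \<le> ee y * ee (1 - x)"
    using xy by (intro mult_mono ee_mono) (auto simp: ee_nonneg)
  then have "ee x * (ee y + ee (1 - y)) \<le> ee y * (ee x + ee (1 - x))"
    by (simp add: algebra_simps)
  then show ?thesis using ee_den_pos[of x] ee_den_pos[of y]
    by (simp add: Sst_def field_simps)
qed

lemma Sst_range: "0 \<le> Sst x" "Sst x \<le> 1"
proof -
  have p: "ee x + ee (1 - x) > 0" by (rule ee_den_pos)
  show "0 \<le> Sst x" using p by (simp add: Sst_def ee_nonneg)
  have "ee x \<le> ee x + ee (1 - x)" by (simp add: ee_nonneg)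
  then show "Sst x \<le> 1" using p by (simp add: Sst_def divide_simps)
qed

lemma Sst_diff: "Sst differentiable (at x)"
  using Sst_Cn[of 1] by (simp add: Cn_def)

lemma Sst_DERIV: "(Sst has_real_derivative deriv Sst x) (at x)"
  using Sst_diff by (simp add: DERIV_deriv_iff_real_differentiable)

lemma Sst_deriv_cont: "isCont (deriv Sst) x"
proof -
  have "\<forall>m<2. \<forall>x. (deriv ^^ m) Sst differentiable (at x)" using Sst_Cn[of 2] unfolding Cn_def .
  from this[rule_format, of 1 x] have "(deriv ^^ 1) Sst differentiable (at x)" by simp
  then have "deriv Sst differentiable (at x)" by simp
  then show ?thesis by (simp add: differentiable_imp_continuous_within)
qed

lemma Sst_deriv_nonneg: "deriv Sst x \<ge> 0"
proof -
  show ?thesis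
  proof (rule ccontr)
    assume "\<not> ?thesis"
    then obtain d where "d > 0" "\<forall>h>0. h < d \<longrightarrow> Sst x > Sst (x + h)"
      using DERIV_neg_dec_right[OF Sst_DERIV, of x] by auto
    then have "Sst x > Sst (x + d/2)" by auto
    moreover have "Sst x \<le> Sst (x + d/2)" using \<open>d > 0\<close> by (intro Sst_mono) auto
    ultimately show False by simp
  qed
qed

lemma Sst_smooth: "(deriv ^^ n) Sst differentiable (at x)"
  using Sst_Cn[of "Suc n"] by (simp add: Cn_def)



lemma deriv_Sst_0: "x \<le> 0 \<Longrightarrow> deriv Sst x = 0"
proof -
  assume x: "x \<le> 0"
  show ?thesis
  proof (rule DERIV_local_min[OF Sst_DERIV, of 1])
    show "\<forall>y. \<bar>x - y\<bar> < 1 \<longrightarrow> Sst x \<le> Sst y" using x Sst_0[OF x] Sst_range by auto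
  qed simp
qed

lemma deriv_Sst_1: "x \<ge> 1 \<Longrightarrow> deriv Sst x = 0"
proof -
  assume x: "x \<ge> 1"
  show ?thesis
  proof (rule DERIV_local_max[OF Sst_DERIV, of 1])
    show "\<forall>y. \<bar>x - y\<bar> < 1 \<longrightarrow> Sst y \<le> Sst x" using x Sst_1[OF x] Sst_range by auto
  qed simp
qed

lemma test_fun_bump:
  fixes s t d T :: real
  assumes "0 < d" "0 < s - d" "s \<le> t" "t + d < T"
  defines "\<eta> \<equiv> \<lambda>u. Sst ((1/d) * u + (1 - s/d)) + (-1) * Sst ((1/d) * u + (- t/d))"
  shows "test_fun T \<eta>"
proof -
  have "Cn (Suc n) \<eta>" for n
    unfolding \<eta>_def by (intro Cn_add Cn_mult Cn_const Cn_affine Sst_Cn)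
  then have sm: "\<forall>n x. (deriv ^^ n) \<eta> differentiable (at x)"
    by (auto simp: Cn_def)
  have "\<eta> u = 0" if "u \<notin> {s - d..t + d}" for u
  proof (cases "u < s - d")
    case True
    then have "(1/d) * u + (1 - s/d) \<le> 0" "(1/d) * u + (- t/d) \<le> 0" using assms
      by (auto simp: field_simps)
    then show ?thesis by (simp add: \<eta>_def Sst_0)
  next
    case False
    then have "u > t + d" using that by auto
    then have "(1/d) * u + (1 - s/d) \<ge> 1" "(1/d) * u + (- t/d) \<ge> 1" using assms
      by (auto simp: field_simps)
    then show ?thesis by (simp add: \<eta>_def Sst_1)
  qed
  then show ?thesis unfolding test_fun_def using sm assms
    by (intro conjI exI[of _ "s - d"] exI[of _ "t + d"]) auto
qed



lemma eta_bound_LINT: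
  fixes \<eta> h :: "real \<Rightarrow> real"
  assumes L: "0 \<le> L" and eb: "\<And>u. \<bar>\<eta> u\<bar> \<le> 1"
    and hb: "(\<integral>\<^sup>+ t. indicator {0<..<T} t * ennreal \<bar>h t\<bar> \<partial>lborel) \<le> ennreal L"
  shows "(LINT t:{0<..<T}|lborel. \<eta> t * h t) \<le> L"
proof (cases "integrable lborel (\<lambda>t. indicator {0<..<T} t *\<^sub>R (\<eta> t * h t))")
  case True
  have "ennreal (norm (LINT t:{0<..<T}|lborel. \<eta> t * h t)) \<le> (\<integral>\<^sup>+ t. norm (indicator {0<..<T} t *\<^sub>R (\<eta> t * h t)) \<partial>lborel)"
    unfolding set_lebesgue_integral_def by (rule integral_norm_bound_ennreal[OF True])
  also have "\<dots> \<le> (\<integral>\<^sup>+ t. indicator {0<..<T} t * ennreal \<bar>h t\<bar> \<partial>lborel)"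
  proof (rule nn_integral_mono)
    fix u
    have "\<bar>\<eta> u\<bar> * \<bar>h u\<bar> \<le> 1 * \<bar>h u\<bar>" by (intro mult_right_mono eb) auto
    then show "ennreal (norm (indicator {0<..<T} u *\<^sub>R (\<eta> u * h u))) \<le> indicator {0<..<T} u * ennreal \<bar>h u\<bar>"
      by (auto simp: indicator_def abs_mult)
  qed
  also have "\<dots> \<le> ennreal L" by (rule hb)
  finally have "norm (LINT t:{0<..<T}|lborel. \<eta> t * h t) \<le> L" using L by (simp add: ennreal_le_iff)
  then show ?thesis by simp
next
  case False
  then show ?thesis using L by (simp add: set_lebesgue_integral_def not_integrable_integral_eq)
qed

lemma incr_interior:
  fixes f h :: "real \<Rightarrow> real" and T L :: real
  assumes fc: "continuous_on {0..T} f" and L: "0 \<le> L"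
    and CEt: "\<And>\<eta>. test_fun T \<eta> \<Longrightarrow>
       - (LINT t:{0<..<T}|lborel. deriv \<eta> t * f t) = (LINT t:{0<..<T}|lborel. \<eta> t * h t)"
    and hb: "(\<integral>\<^sup>+ t. indicator {0<..<T} t * ennreal \<bar>h t\<bar> \<partial>lborel) \<le> ennreal L"
    and st: "0 < s" "s \<le> t" "t < T" and e: "e > 0"
  shows "f t - f s \<le> L + 2 * e"
proof -
  have "\<exists>d>0. \<forall>u\<in>{0..T}. dist u s < d \<longrightarrow> dist (f u) (f s) < e"
    using fc st e unfolding continuous_on_iff by auto
  then obtain ds where ds: "ds > 0" "\<And>u. u \<in> {0..T} \<Longrightarrow> \<bar>u - s\<bar> < ds \<Longrightarrow> \<bar>f u - f s\<bar> < e"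
    by (auto simp: dist_real_def)
  have "\<exists>d>0. \<forall>u\<in>{0..T}. dist u t < d \<longrightarrow> dist (f u) (f t) < e"
    using fc st e unfolding continuous_on_iff by auto
  then obtain dt where dt: "dt > 0" "\<And>u. u \<in> {0..T} \<Longrightarrow> \<bar>u - t\<bar> < dt \<Longrightarrow> \<bar>f u - f t\<bar> < e"
    by (auto simp: dist_real_def)
  define d where "d = min (min ds dt) (min s (T - t)) / 2"
  have m: "min (min ds dt) (min s (T - t)) > 0" "min (min ds dt) (min s (T - t)) \<le> ds"
    "min (min ds dt) (min s (T - t)) \<le> dt" "min (min ds dt) (min s (T - t)) \<le> s"
    "min (min ds dt) (min s (T - t)) \<le> T - t" using ds dt st by auto
  have d: "0 < d" "d < ds" "d < dt" "0 < s - d" "t + d < T"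
    using m unfolding d_def by linarith+
  define a where "a = 1 / d"
  define c1 where "c1 = 1 - s / d"
  define c2 where "c2 = - t / d"
  define \<eta> where "\<eta> = (\<lambda>u. Sst ((1/d) * u + (1 - s/d)) + (-1) * Sst ((1/d) * u + (- t/d)))"
  have tf: "test_fun T \<eta>" unfolding \<eta>_def using d st by (intro test_fun_bump) auto
  have a: "a > 0" using d by (simp add: a_def)
  have aff1: "a * u + c1 \<le> 0 \<longleftrightarrow> u \<le> s - d" "a * u + c1 \<ge> 1 \<longleftrightarrow> u \<ge> s" for u
    using d by (auto simp: a_def c1_def field_simps)
  have aff2: "a * u + c2 \<le> 0 \<longleftrightarrow> u \<le> t" "a * u + c2 \<ge> 1 \<longleftrightarrow> u \<ge> t + d" for u
    using d by (auto simp: a_def c2_def field_simps)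
  have eta_eq: "\<eta> = (\<lambda>u. Sst (a * u + c1) - Sst (a * u + c2))"
    by (auto simp: \<eta>_def a_def c1_def c2_def fun_eq_iff)
  define P1 where "P1 u = a * deriv Sst (a * u + c1)" for u
  define P2 where "P2 u = a * deriv Sst (a * u + c2)" for u
  have DS: "((\<lambda>u. Sst (a * u + c)) has_real_derivative a * deriv Sst (a * u + c)) (at u)" for c u
  proof -
    have "((\<lambda>u. a * u + c) has_real_derivative a) (at u)" by (auto intro!: derivative_eq_intros)
    from DERIV_chain2[OF Sst_DERIV this] show ?thesis by (simp add: mult.commute)
  qed
  have deta: "deriv \<eta> u = P1 u - P2 u" for u
    unfolding eta_eq P1_def P2_def by (rule DERIV_imp_deriv) (intro DERIV_diff DS)
  have P1z: "P1 u = 0" if "u \<notin> {s - d..s}" for u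
    using that aff1[of u] deriv_Sst_0 deriv_Sst_1 by (auto simp: P1_def)
  have P2z: "P2 u = 0" if "u \<notin> {t..t + d}" for u
    using that aff2[of u] deriv_Sst_0 deriv_Sst_1 by (auto simp: P2_def)
  have P1n: "P1 u \<ge> 0" "P2 u \<ge> 0" for u using a Sst_deriv_nonneg by (auto simp: P1_def P2_def)
  have Pc: "isCont P1 u" "isCont P2 u" for u
    unfolding P1_def P2_def
    by (auto intro!: continuous_intros isCont_o2[OF _ Sst_deriv_cont])
  have fcont: "isCont f u" if "0 < u" "u < T" for u
    using fc that by (auto intro: continuous_on_interior[of "{0..T}"])
  have int1: "integrable lborel (\<lambda>u. (P1 u * f u) * indicator {s - d..s} u)"
    using d st by (intro borel_integrable_atLeastAtMost) (auto intro!: continuous_intros Pc fcont)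
  have int2: "integrable lborel (\<lambda>u. (P2 u * f u) * indicator {t..t+d} u)"
    using d st by (intro borel_integrable_atLeastAtMost) (auto intro!: continuous_intros Pc fcont)
  have int1': "integrable lborel (\<lambda>u. P1 u * indicator {s - d..s} u)"
    by (intro borel_integrable_atLeastAtMost) (auto intro!: Pc)
  have int2': "integrable lborel (\<lambda>u. P2 u * indicator {t..t+d} u)"
    by (intro borel_integrable_atLeastAtMost) (auto intro!: Pc)
  have I1: "(\<integral>u. P1 u * indicator {s - d..s} u \<partial>lborel) = 1"
  proof -
    have "(\<integral>u. P1 u * indicator {s - d..s} u \<partial>lborel) = Sst (a * s + c1) - Sst (a * (s - d) + c1)"
      using d unfolding P1_def by (intro integral_FTC_Icc_real DS) (auto intro!: continuous_intros isCont_o2[OF _ Sst_deriv_cont])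
    also have "\<dots> = 1" using aff1[of s] aff1[of "s - d"] Sst_0 Sst_1 by auto
    finally show ?thesis .
  qed
  have I2: "(\<integral>u. P2 u * indicator {t..t+d} u \<partial>lborel) = 1"
  proof -
    have "(\<integral>u. P2 u * indicator {t..t+d} u \<partial>lborel) = Sst (a * (t + d) + c2) - Sst (a * t + c2)"
      using d unfolding P2_def by (intro integral_FTC_Icc_real DS) (auto intro!: continuous_intros isCont_o2[OF _ Sst_deriv_cont])
    also have "\<dots> = 1" using aff2[of t] aff2[of "t + d"] Sst_0 Sst_1 by auto
    finally show ?thesis .
  qed
  have split: "indicator {0<..<T} u *\<^sub>R (deriv \<eta> u * f u) =
      (P1 u * f u) * indicator {s - d..s} u - (P2 u * f u) * indicator {t..t+d} u" for u
  proof -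
    have "u \<in> {s - d..s} \<Longrightarrow> u \<in> {0<..<T}" "u \<in> {t..t+d} \<Longrightarrow> u \<in> {0<..<T}" using d st by auto
    then show ?thesis using P1z[of u] P2z[of u] unfolding deta
      by (auto simp: indicator_def algebra_simps)
  qed
  have lhs: "- (LINT u:{0<..<T}|lborel. deriv \<eta> u * f u) =
      (\<integral>u. (P2 u * f u) * indicator {t..t+d} u \<partial>lborel) - (\<integral>u. (P1 u * f u) * indicator {s - d..s} u \<partial>lborel)"
    unfolding set_lebesgue_integral_def split using int1 int2 by simp
  have At: "(\<integral>u. (P2 u * f u) * indicator {t..t+d} u \<partial>lborel) \<ge> f t - e"
  proof -
    have "0 \<le> (\<integral>u. P2 u * (f u - (f t - e)) * indicator {t..t+d} u \<partial>lborel)"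
    proof (rule integral_nonneg_AE, rule AE_I2)
      fix u show "0 \<le> P2 u * (f u - (f t - e)) * indicator {t..t+d} u"
      proof (cases "u \<in> {t..t+d}")
        case True
        then have "\<bar>f u - f t\<bar> < e" using d st by (intro dt) auto
        then show ?thesis using True P1n by auto
      qed auto
    qed
    also have "\<dots> = (\<integral>u. (P2 u * f u) * indicator {t..t+d} u - (f t - e) * (P2 u * indicator {t..t+d} u) \<partial>lborel)"
      by (intro Bochner_Integration.integral_cong) (auto simp: algebra_simps)
    also have "\<dots> = (\<integral>u. (P2 u * f u) * indicator {t..t+d} u \<partial>lborel) - (f t - e)"
      using int2 int2' I2 by simp
    finally show ?thesis by simp
  qed
  have As: "(\<integral>u. (P1 u * f u) * indicator {s - d..s} u \<partial>lborel) \<le> f s + e"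
  proof -
    have "0 \<le> (\<integral>u. P1 u * ((f s + e) - f u) * indicator {s - d..s} u \<partial>lborel)"
    proof (rule integral_nonneg_AE, rule AE_I2)
      fix u show "0 \<le> P1 u * ((f s + e) - f u) * indicator {s - d..s} u"
      proof (cases "u \<in> {s - d..s}")
        case True
        then have "\<bar>f u - f s\<bar> < e" using d st by (intro ds) auto
        then show ?thesis using True P1n by auto
      qed auto
    qed
    also have "\<dots> = (\<integral>u. (f s + e) * (P1 u * indicator {s - d..s} u) - (P1 u * f u) * indicator {s - d..s} u \<partial>lborel)"
      by (intro Bochner_Integration.integral_cong) (auto simp: algebra_simps)
    also have "\<dots> = (f s + e) - (\<integral>u. (P1 u * f u) * indicator {s - d..s} u \<partial>lborel)"
      using int1 int1' I1 by simp
    finally show ?thesis by simp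
  qed
  have eb: "\<bar>\<eta> u\<bar> \<le> 1" for u
  proof -
    have "1 - s/d - (-t/d) = 1 + (t - s)/d" by (simp add: diff_divide_distrib)
    moreover have "(t - s)/d \<ge> 0" using d st by simp
    ultimately have "a * u + c2 \<le> a * u + c1" unfolding c1_def c2_def by linarith
    then have "Sst (a * u + c2) \<le> Sst (a * u + c1)" by (rule Sst_mono)
    then show ?thesis using Sst_range[of "a * u + c1"] Sst_range[of "a * u + c2"]
      by (auto simp: eta_eq)
  qed
  have "(LINT t:{0<..<T}|lborel. \<eta> t * h t) \<le> L"
    by (rule eta_bound_LINT[OF L eb hb])
  then show ?thesis using CEt[OF tf] lhs At As by linarith
qed

lemma incr_bound:
  fixes f h :: "real \<Rightarrow> real" and T L :: real
  assumes fc: "continuous_on {0..T} f" and L: "0 \<le> L"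
    and CEt: "\<And>\<eta>. test_fun T \<eta> \<Longrightarrow>
       - (LINT t:{0<..<T}|lborel. deriv \<eta> t * f t) = (LINT t:{0<..<T}|lborel. \<eta> t * h t)"
    and hb: "(\<integral>\<^sup>+ t. indicator {0<..<T} t * ennreal \<bar>h t\<bar> \<partial>lborel) \<le> ennreal L"
    and st: "0 \<le> s" "s \<le> t" "t \<le> T"
  shows "f t - f s \<le> L"
proof (cases "s = t")
  case True then show ?thesis using L by simp
next
  case False
  then have st': "s < t" using st by simp
  show ?thesis
  proof (rule field_le_epsilon)
    fix e :: real assume e: "e > 0"
    have "\<exists>d>0. \<forall>u\<in>{0..T}. dist u s < d \<longrightarrow> dist (f u) (f s) < e/4"
      using fc[unfolded continuous_on_iff, rule_format, of s "e/4"] st e by auto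
    then obtain ds where ds: "ds > 0" "\<And>u. u \<in> {0..T} \<Longrightarrow> \<bar>u - s\<bar> < ds \<Longrightarrow> \<bar>f u - f s\<bar> < e/4"
      by (auto simp: dist_real_def)
    have "\<exists>d>0. \<forall>u\<in>{0..T}. dist u t < d \<longrightarrow> dist (f u) (f t) < e/4"
      using fc[unfolded continuous_on_iff, rule_format, of t "e/4"] st e by auto
    then obtain dt where dt: "dt > 0" "\<And>u. u \<in> {0..T} \<Longrightarrow> \<bar>u - t\<bar> < dt \<Longrightarrow> \<bar>f u - f t\<bar> < e/4"
      by (auto simp: dist_real_def)
    define ms where "ms = min ds ((t - s) / 3)"
    define mt where "mt = min dt ((t - s) / 3)"
    have m: "ms > 0" "ms \<le> ds" "ms \<le> (t - s) / 3" "mt > 0" "mt \<le> dt" "mt \<le> (t - s) / 3"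
      using ds dt st' unfolding ms_def mt_def by (simp_all add: min.coboundedI1 min.coboundedI2 min_def)
    define s' where "s' = s + ms / 2"
    define t' where "t' = t - mt / 2"
    have pos: "0 < s'" "s' \<le> t'" "t' < T" "\<bar>s' - s\<bar> < ds" "\<bar>t' - t\<bar> < dt" "s' \<le> T" "0 \<le> t'"
      using m st st' unfolding s'_def t'_def by auto
    have "f t' - f s' \<le> L + 2 * (e/4)"
      using e pos by (intro incr_interior[OF fc L CEt hb]) auto
    moreover have "\<bar>f s' - f s\<bar> < e/4" using pos by (intro ds) auto
    moreover have "\<bar>f t' - f t\<bar> < e/4" using pos st by (intro dt) auto
    ultimately show "f t - f s \<le> L + e" by linarith
  qed
qed



lemma nn_integral_cmult_le:
  fixes f :: "'a \<Rightarrow> ennreal"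
  assumes c: "0 \<le> c"
  shows "(\<integral>\<^sup>+ x. ennreal c * f x \<partial>M) \<le> ennreal c * (\<integral>\<^sup>+ x. f x \<partial>M)"
proof (cases "c = 0")
  case True then show ?thesis by simp
next
  case False
  then have cp: "c > 0" using c by simp
  show ?thesis
    unfolding nn_integral_def[of M "\<lambda>x. ennreal c * f x"]
  proof (rule SUP_least)
    fix g assume g: "g \<in> {g. simple_function M g \<and> g \<le> (\<lambda>x. ennreal c * f x)}"
    define g' where "g' x = ennreal (1/c) * g x" for x
    have sg': "simple_function M g'" using g unfolding g'_def by (auto intro!: simple_function_mult)
    have gg: "g x = ennreal c * g' x" for x
    proof -
      have a: "ennreal c * g' x = (ennreal c * ennreal (1/c)) * g x"
        by (simp add: g'_def mult.assoc)
      have b: "ennreal c * ennreal (1/c) = 1"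
        using cp ennreal_mult[of c "1/c"] by simp
      show ?thesis using a b by simp
    qed
    have "g' \<le> f"
    proof (rule le_funI)
      fix x
      have "g x \<le> ennreal c * f x" using g by (auto simp: le_fun_def)
      then have "ennreal (1/c) * g x \<le> ennreal (1/c) * (ennreal c * f x)" by (rule mult_left_mono) simp
      also have "\<dots> = (ennreal (1/c) * ennreal c) * f x" by (simp add: mult.assoc)
      also have "ennreal (1/c) * ennreal c = 1" using cp ennreal_mult[of "1/c" c] by simp
      finally show "g' x \<le> f x" by (simp add: g'_def)
    qed
    have "integral\<^sup>S M g = ennreal c * integral\<^sup>S M g'"
      unfolding gg by (rule simple_integral_mult[OF sg'])
    also have "integral\<^sup>S M g' = integral\<^sup>N M g'" using sg' by (simp add: nn_integral_eq_simple_integral)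
    also have "integral\<^sup>N M g' \<le> integral\<^sup>N M f" using \<open>g' \<le> f\<close> by (intro nn_integral_mono) (auto simp: le_fun_def)
    finally show "integral\<^sup>S M g \<le> ennreal c * (\<integral>\<^sup>+ x. f x \<partial>M)"
      by (simp add: mult_left_mono)
  qed
qed

lemma nn_integral_add_le:
  fixes f c :: "'a \<Rightarrow> ennreal"
  assumes cm: "c \<in> borel_measurable M" and cf: "\<And>x. c x < top"
  shows "(\<integral>\<^sup>+ x. c x + f x \<partial>M) \<le> (\<integral>\<^sup>+ x. c x \<partial>M) + (\<integral>\<^sup>+ x. f x \<partial>M)"
  unfolding nn_integral_def[of M "\<lambda>x. c x + f x"]
proof (rule SUP_least)
  fix g assume g: "g \<in> {g. simple_function M g \<and> g \<le> (\<lambda>x. c x + f x)}"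
  then have gm: "g \<in> borel_measurable M" by (auto intro: borel_measurable_simple_function)
  have le: "g x \<le> min (g x) (c x) + (g x - c x)" for x
  proof (cases "g x \<le> c x")
    case True then show ?thesis by simp
  next
    case False
    then have "c x \<le> g x" by simp
    then have eq: "c x + (g x - c x) = g x" using cf[of x]
      by (metis add_diff_inverse_ennreal)
    have mn: "min (g x) (c x) = c x" using \<open>c x \<le> g x\<close> by simp
    show ?thesis by (metis eq mn order_refl)
  qed
  have df: "g x - c x \<le> f x" for x
  proof -
    have "g x \<le> c x + f x" using g by (auto simp: le_fun_def)
    then show ?thesis using cf[of x] by (simp add: ennreal_minus_le_iff less_top[symmetric])
  qed
  have "integral\<^sup>S M g = integral\<^sup>N M g" using g by (simp add: nn_integral_eq_simple_integral)
  also have "\<dots> \<le> (\<integral>\<^sup>+ x. min (g x) (c x) + (g x - c x) \<partial>M)"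
    by (intro nn_integral_mono le)
  also have "\<dots> = (\<integral>\<^sup>+ x. min (g x) (c x) \<partial>M) + (\<integral>\<^sup>+ x. (g x - c x) \<partial>M)"
    using gm cm by (intro nn_integral_add) auto
  also have "\<dots> \<le> (\<integral>\<^sup>+ x. c x \<partial>M) + (\<integral>\<^sup>+ x. f x \<partial>M)"
    by (intro add_mono nn_integral_mono df) auto
  finally show "integral\<^sup>S M g \<le> (\<integral>\<^sup>+ x. c x \<partial>M) + (\<integral>\<^sup>+ x. f x \<partial>M)" .
qed



lemma DERIV_glue:
  fixes f g h :: "real \<Rightarrow> real"
  assumes g: "(g has_real_derivative D) (at c)" and h: "(h has_real_derivative D) (at c)"
    and fg: "\<And>x. c - 1 < x \<Longrightarrow> x \<le> c \<Longrightarrow> f x = g x" and fh: "\<And>x. x \<ge> c \<Longrightarrow> x < c + 1 \<Longrightarrow> f x = h x"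
  shows "(f has_real_derivative D) (at c)"
proof -
  have gl: "((\<lambda>t. (g (c + t) - g c) / t) \<longlongrightarrow> D) (at 0)" using g by (simp add: DERIV_def)
  have hl: "((\<lambda>t. (h (c + t) - h c) / t) \<longlongrightarrow> D) (at 0)" using h by (simp add: DERIV_def)
  have l: "((\<lambda>t. (f (c + t) - f c) / t) \<longlongrightarrow> D) (at_left 0)"
  proof (rule Lim_transform_eventually[OF tendsto_mono[OF at_le[of _ UNIV] gl[unfolded at_left_eq[symmetric]]]])
    show "\<forall>\<^sub>F t in at_left 0. (g (c + t) - g c) / t = (f (c + t) - f c) / t"
      unfolding eventually_at_left_field by (rule exI[of _ "-1"]) (auto simp: fg)
  qed simp
  have r: "((\<lambda>t. (f (c + t) - f c) / t) \<longlongrightarrow> D) (at_right 0)"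
  proof (rule Lim_transform_eventually[OF tendsto_mono[OF at_le[of _ UNIV] hl]])
    show "\<forall>\<^sub>F t in at_right 0. (h (c + t) - h c) / t = (f (c + t) - f c) / t"
      unfolding eventually_at_right_field by (rule exI[of _ "1"]) (auto simp: fh)
  qed simp
  have "((\<lambda>t. (f (c + t) - f c) / t) \<longlongrightarrow> D) (at 0)" using l r by (rule filterlim_split_at)
  then show ?thesis by (simp add: DERIV_def)
qed

definition tau :: "real \<Rightarrow> real" where
  "tau u = (if u \<le> 1 then u else if u \<le> 2 then u - (u - 1)^2 / 2 else 3/2)"

definition tau' :: "real \<Rightarrow> real" where
  "tau' u = min 1 (max 0 (2 - u))"

lemma tau'_alt: "tau' u = (if u \<le> 1 then 1 else if u \<le> 2 then 2 - u else 0)"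
  by (auto simp: tau'_def)

lemma tau_DERIV: "(tau has_real_derivative tau' u) (at u)"
proof -
  have d1: "((\<lambda>u. u) has_real_derivative 1) (at u)" for u by (rule DERIV_ident)
  have d2: "((\<lambda>u. u - (u - 1)^2 / 2) has_real_derivative (2 - u)) (at u)" for u
    by (auto intro!: derivative_eq_intros simp: field_simps)
  have d3: "((\<lambda>u. 3/2) has_real_derivative 0) (at u)" for u by simp
  consider "u < 1" | "u = 1" | "1 < u \<and> u < 2" | "u = 2" | "u > 2" by linarith
  then show ?thesis
  proof cases
    case 1
    have "(tau has_real_derivative 1) (at u)"
      by (rule has_field_derivative_transform_within_open[OF d1[of u], where S="{..<1}"])
         (use 1 in \<open>auto simp: tau_def tau'_alt\<close>)
    then show ?thesis using 1 by (simp add: tau'_alt)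
  next
    case 2
    have "(tau has_real_derivative 1) (at 1)"
      by (rule DERIV_glue[OF d1 d2[of 1, simplified]]) (auto simp: tau_def tau'_alt)
    then show ?thesis using 2 by (simp add: tau'_alt)
  next
    case 3
    have "(tau has_real_derivative (2 - u)) (at u)"
      by (rule has_field_derivative_transform_within_open[OF d2[of u], where S="{1<..<2}"])
         (use 3 in \<open>auto simp: tau_def tau'_alt\<close>)
    then show ?thesis using 3 by (simp add: tau'_alt)
  next
    case 4
    have "(tau has_real_derivative 0) (at 2)"
      by (rule DERIV_glue[OF d2[of 2, simplified] d3]) (auto simp: tau_def power2_eq_square)
    then show ?thesis unfolding 4 by (simp add: tau'_alt)
  next
    case 5
    have "(tau has_real_derivative 0) (at u)"
      by (rule has_field_derivative_transform_within_open[OF d3[of u], where S="{2<..}"])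
         (use 5 in \<open>auto simp: tau_def tau'_alt\<close>)
    then show ?thesis using 5 by (simp add: tau'_alt)
  qed
qed

lemma tau'_cont: "continuous_on UNIV tau'"
  unfolding tau'_def by (intro continuous_intros)

lemma tau'_range: "0 \<le> tau' u" "tau' u \<le> 1"
  by (auto simp: tau'_def)

lemma tau_nonneg: "0 \<le> u \<Longrightarrow> 0 \<le> tau u"
proof -
  assume u: "0 \<le> u"
  have "(u - 1)^2 \<le> 1" if "1 < u" "u \<le> 2"
    using that by (intro power_le_one) auto
  then show ?thesis using u by (auto simp: tau_def)
qed

lemma tau_le_self: "tau u \<le> u"
  by (auto simp: tau_def)

lemma tau_le: "tau u \<le> 3/2"
proof -
  have "u - (u - 1)^2 / 2 \<le> 3/2" for u :: real
  proof -
    have e: "u - (u - 1)^2 / 2 = 3/2 - (u - 2)^2 / 2" by (simp add: power2_eq_square field_simps)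
    have "0 \<le> (u - 2)^2" by simp
    then show ?thesis unfolding e by simp
  qed
  then show ?thesis by (auto simp: tau_def)
qed

lemma tau_big: "u \<ge> 2 \<Longrightarrow> tau u = 3/2"
  by (auto simp: tau_def power2_eq_square)

lemma tau_small: "u \<le> 1 \<Longrightarrow> tau u = u"
  by (auto simp: tau_def)

lemma tau'_mult: "0 \<le> u \<Longrightarrow> tau' u * u \<le> 2 * tau u"
proof -
  assume u: "0 \<le> u"
  consider "u \<le> 1" | "1 < u \<and> u \<le> 2" | "2 < u" by linarith
  then show ?thesis
  proof cases
    case 1 then show ?thesis using u by (simp add: tau_def tau'_alt)
  next
    case 2
    have "(2 - u) * u \<le> 2 * (u - (u - 1)^2 / 2)"
      using 2 by (simp add: power2_eq_square algebra_simps)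
    then show ?thesis using 2 by (simp add: tau_def tau'_alt)
  next
    case 3 then show ?thesis by (simp add: tau_def tau'_alt)
  qed
qed

lemma young_powr:
  fixes w c d p :: real
  assumes w: "0 \<le> w" and c: "0 \<le> c" and d: "0 < d" and p: "1 \<le> p"
  shows "w powr (p - 1) * c \<le> d * w powr p + d powr (1 - p) * c powr p"
proof (cases "c \<le> d * w")
  case True
  have "w powr (p - 1) * c \<le> w powr (p - 1) * (d * w)"
    using True by (intro mult_left_mono) auto
  also have "\<dots> \<le> d * w powr p"
  proof (cases "w = 0")
    case True then show ?thesis by simp
  next
    case False
    then have "w powr (p - 1) * w = w powr p" using w powr_mult_base[of w "p - 1"] by (simp add: mult.commute)
    then show ?thesis by (simp add: algebra_simps)
  qed
  also have "\<dots> \<le> d * w powr p + d powr (1 - p) * c powr p" by simp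
  finally show ?thesis .
next
  case False
  then have cp: "c > 0" and wc: "w \<le> c / d" using d w
    by (auto simp: field_simps) (smt (verit) mult_nonneg_nonneg)
  have "w powr (p - 1) * c \<le> (c / d) powr (p - 1) * c"
    using wc w p c by (intro mult_right_mono powr_mono2) auto
  also have "(c / d) powr (p - 1) * c = d powr (1 - p) * c powr p"
  proof -
    have eq1: "(c / d) powr (p - 1) = c powr (p - 1) / d powr (p - 1)"
      using cp d by (simp add: powr_divide)
    moreover have "c powr (p - 1) * c = c powr p" using cp powr_mult_base[of c "p - 1"] by (simp add: mult.commute)
    moreover have "1 / d powr (p - 1) = d powr (1 - p)"
      using d by (simp add: powr_minus_divide[symmetric] powr_minus)
    ultimately have "(c / d) powr (p - 1) * c = (c powr (p - 1) * c) * (1 / d powr (p - 1))"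
      by (simp only: eq1) (simp add: divide_inverse mult_ac)
    also have "\<dots> = c powr p * d powr (1 - p)"
      by (simp only: \<open>c powr (p - 1) * c = c powr p\<close> \<open>1 / d powr (p - 1) = d powr (1 - p)\<close>)
    finally show ?thesis by simp
  qed
  also have "\<dots> \<le> d * w powr p + d powr (1 - p) * c powr p" using d w by simp
  finally show ?thesis .
qed



definition Gp :: "real \<Rightarrow> 'a::euclidean_space \<Rightarrow> real" where
  "Gp p x = (1 + x \<bullet> x) powr (p / 2)"

definition gGp :: "real \<Rightarrow> 'a::euclidean_space \<Rightarrow> 'a" where
  "gGp p x = (p * (1 + x \<bullet> x) powr (p / 2 - 1)) *\<^sub>R x"

lemma one_plus_inner_pos: "0 < 1 + x \<bullet> (x::'a::euclidean_space)"
  using inner_ge_zero[of x] by linarith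

lemma one_plus_inner_ne[simp]: "1 + x \<bullet> (x::'a::euclidean_space) \<noteq> 0"
  using one_plus_inner_pos[of x] by linarith

lemma Gp_deriv: "(Gp p has_derivative (\<lambda>h. gGp p x \<bullet> h)) (at x)"
proof -
  have pos: "0 < 1 + x \<bullet> x" by (rule one_plus_inner_pos)
  have "(Gp p has_derivative (\<lambda>h. (1 + x \<bullet> x) powr (p / 2) * ((h \<bullet> x + x \<bullet> h) * (p / 2) / (1 + x \<bullet> x)))) (at x)"
    unfolding Gp_def using pos by (auto intro!: derivative_eq_intros)
  moreover have "(\<lambda>h. (1 + x \<bullet> x) powr (p / 2) * ((h \<bullet> x + x \<bullet> h) * (p / 2) / (1 + x \<bullet> x))) = (\<lambda>h. gGp p x \<bullet> h)"
  proof
    fix h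
    obtain A where A: "A = (1 + x \<bullet> x) powr (p / 2 - 1)" by blast
    have e: "(1 + x \<bullet> x) powr (p / 2) = A * (1 + x \<bullet> x)"
      using pos unfolding A powr_add[symmetric, of "1 + x \<bullet> x" "p/2 - 1" 1, simplified] by simp
    have g: "gGp p x = (p * A) *\<^sub>R x" by (simp add: gGp_def A)
    show "(1 + x \<bullet> x) powr (p / 2) * ((h \<bullet> x + x \<bullet> h) * (p / 2) / (1 + x \<bullet> x)) = gGp p x \<bullet> h"
      unfolding e g using pos by (simp add: inner_commute field_simps)
  qed
  ultimately show ?thesis by simp
qed

lemma Gp_cont: "continuous_on UNIV (Gp p)"
  unfolding Gp_def using one_plus_inner_pos
  by (intro continuous_intros) auto

lemma gGp_cont: "continuous_on UNIV (gGp p)"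
  unfolding gGp_def using one_plus_inner_pos
  by (intro continuous_intros) auto

lemma Gp_ge1: "p \<ge> 0 \<Longrightarrow> 1 \<le> Gp p x"
  unfolding Gp_def using inner_ge_zero[of x] by (intro ge_one_powr_ge_zero) auto

lemma norm_le_Gp: "p \<ge> 1 \<Longrightarrow> norm x \<le> Gp p x"
proof -
  assume p: "p \<ge> 1"
  have "norm x = sqrt (x \<bullet> x)" by (simp add: norm_eq_sqrt_inner)
  also have "\<dots> \<le> sqrt (1 + x \<bullet> x)" by simp
  also have "\<dots> = (1 + x \<bullet> x) powr (1/2)" using one_plus_inner_pos[of x] by (simp add: powr_half_sqrt)
  also have "\<dots> \<le> (1 + x \<bullet> x) powr (p/2)" using p inner_ge_zero[of x] by (intro powr_mono) auto
  finally show ?thesis by (simp add: Gp_def)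
qed

lemma normp_le_Gp: "p \<ge> 1 \<Longrightarrow> norm x powr p \<le> Gp p x"
proof -
  assume p: "p \<ge> 1"
  have "norm x powr p = (norm x ^ 2) powr (p / 2)"
  proof (cases "norm x = 0")
    case False
    have a: "norm x powr 2 = norm x ^ 2" by (rule powr_numeral) (use False in simp)
    have "(norm x ^ 2) powr (p/2) = (norm x powr 2) powr (p/2)" by (simp only: a)
    also have "\<dots> = norm x powr (2 * (p/2))" by (rule powr_powr)
    also have "2 * (p/2) = p" by simp
    finally show ?thesis by simp
  qed simp
  also have "\<dots> \<le> (1 + x \<bullet> x) powr (p / 2)"
    using p by (intro powr_mono2) (auto simp: power2_norm_eq_inner)
  finally show ?thesis by (simp add: Gp_def)
qed

lemma Gp_le: "p \<ge> 1 \<Longrightarrow> Gp p x \<le> 2 powr (p / 2) * (1 + norm x powr p)"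
proof -
  assume p: "p \<ge> 1"
  have "1 + x \<bullet> x \<le> 2 * max 1 (x \<bullet> x)" by auto
  then have "Gp p x \<le> (2 * max 1 (x \<bullet> x)) powr (p / 2)"
    unfolding Gp_def using p one_plus_inner_pos[of x] by (intro powr_mono2) auto
  also have "\<dots> = 2 powr (p / 2) * max 1 (x \<bullet> x) powr (p / 2)"
    by (simp add: powr_mult)
  also have "max 1 (x \<bullet> x) powr (p / 2) \<le> 1 + norm x powr p"
  proof (cases "x \<bullet> x \<le> 1")
    case True then show ?thesis by simp
  next
    case False
    have "(x \<bullet> x) powr (p / 2) = norm x powr p"
    proof (cases "norm x = 0")
      case False
      have a: "norm x powr 2 = norm x ^ 2" by (rule powr_numeral) (use False in simp)
      have "(norm x ^ 2) powr (p/2) = (norm x powr 2) powr (p/2)" by (simp only: a)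
      also have "\<dots> = norm x powr (2 * (p/2))" by (rule powr_powr)
      also have "2 * (p/2) = p" by simp
      finally show ?thesis by (simp add: power2_norm_eq_inner)
    qed simp
    then show ?thesis using False by simp
  qed
  then have "2 powr (p / 2) * max 1 (x \<bullet> x) powr (p / 2) \<le> 2 powr (p / 2) * (1 + norm x powr p)"
    by (intro mult_left_mono) auto
  finally show ?thesis .
qed

lemma norm_gGp: "p \<ge> 1 \<Longrightarrow> norm (gGp p x) \<le> p * ((1 + x \<bullet> x) powr (1/2)) powr (p - 1)"
proof -
  assume p: "p \<ge> 1"
  have pos: "0 < 1 + x \<bullet> x" by (rule one_plus_inner_pos)
  have "norm (gGp p x) = p * (1 + x \<bullet> x) powr (p / 2 - 1) * norm x"
    using p by (simp add: gGp_def abs_mult)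
  also have "p * (1 + x \<bullet> x) powr (p / 2 - 1) * norm x \<le> p * (1 + x \<bullet> x) powr (p / 2 - 1) * (1 + x \<bullet> x) powr (1/2)"
    using p norm_le_Gp[of 1 x] by (intro mult_left_mono) (auto simp: Gp_def)
  also have "p * (1 + x \<bullet> x) powr (p / 2 - 1) * (1 + x \<bullet> x) powr (1/2) = p * ((1 + x \<bullet> x) powr (1/2)) powr (p - 1)"
    using pos by (simp add: powr_powr powr_add[symmetric] field_simps)
  finally show ?thesis .
qed

lemma Gp_w: "Gp p x = ((1 + x \<bullet> x) powr (1/2)) powr p"
  by (simp add: Gp_def powr_powr)

definition phiR :: "real \<Rightarrow> real \<Rightarrow> 'a::euclidean_space \<Rightarrow> real" where
  "phiR p R x = R * tau (Gp p x / R)"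

definition gphiR :: "real \<Rightarrow> real \<Rightarrow> 'a::euclidean_space \<Rightarrow> 'a" where
  "gphiR p R x = tau' (Gp p x / R) *\<^sub>R gGp p x"

lemma phiR_deriv: "R > 0 \<Longrightarrow> (phiR p R has_derivative (\<lambda>h. gphiR p R x \<bullet> h)) (at x)"
proof -
  assume R: "R > 0"
  have t: "(tau has_derivative (\<lambda>h. tau' (Gp p x / R) * h)) (at (Gp p x / R))"
    using tau_DERIV[of "Gp p x / R"] by (simp add: has_field_derivative_def)
  have g: "((\<lambda>x. Gp p x / R) has_derivative (\<lambda>h. (gGp p x \<bullet> h) / R)) (at x)"
    using Gp_deriv[of p x] R by (auto intro!: derivative_eq_intros)
  have "((\<lambda>x. R * tau (Gp p x / R)) has_derivative (\<lambda>h. R * (tau' (Gp p x / R) * ((gGp p x \<bullet> h) / R)))) (at x)"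
    using has_derivative_compose[OF g t] R by (auto intro!: derivative_eq_intros)
  moreover have "(\<lambda>h. R * (tau' (Gp p x / R) * ((gGp p x \<bullet> h) / R))) = (\<lambda>h. gphiR p R x \<bullet> h)"
    using R by (auto simp: gphiR_def fun_eq_iff)
  ultimately have fin: "((\<lambda>x. R * tau (Gp p x / R)) has_derivative (\<lambda>h. gphiR p R x \<bullet> h)) (at x)"
    by metis
  show ?thesis unfolding phiR_def[abs_def] by (rule fin)
qed

lemma phiR_cont: "R > 0 \<Longrightarrow> continuous_on UNIV (phiR p R)"
proof -
  assume R: "R > 0"
  have "continuous_on UNIV (\<lambda>x. Gp p x / R)" using R by (intro continuous_intros Gp_cont) auto
  moreover have "continuous_on UNIV tau"
  proof (rule differentiable_imp_continuous_on)
    show "tau differentiable_on UNIV"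
      unfolding differentiable_on_def real_differentiable_def using tau_DERIV
      by (metis has_field_derivative_at_within)
  qed
  ultimately show ?thesis unfolding phiR_def
    by (intro continuous_intros) (auto intro: continuous_on_compose2[of UNIV tau])
qed

lemma gphiR_cont: "R > 0 \<Longrightarrow> continuous_on UNIV (gphiR p R)"
  unfolding gphiR_def
  by (intro continuous_intros gGp_cont continuous_on_compose2[OF tau'_cont] Gp_cont) auto

lemma phiR_nonneg: "R > 0 \<Longrightarrow> p \<ge> 0 \<Longrightarrow> 0 \<le> phiR p R x"
  unfolding phiR_def using Gp_ge1[of p x] by (intro mult_nonneg_nonneg tau_nonneg) auto

lemma phiR_le: "R > 0 \<Longrightarrow> phiR p R x \<le> 3/2 * R"
  unfolding phiR_def using tau_le[of "Gp p x / R"] by (simp add: mult.commute)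

lemma phiR_le_Gp: "R > 0 \<Longrightarrow> phiR p R x \<le> Gp p x"
  unfolding phiR_def using tau_le_self[of "Gp p x / R"] by (simp add: field_simps)

lemma phiR_eq_Gp: "R > 0 \<Longrightarrow> Gp p x \<le> R \<Longrightarrow> phiR p R x = Gp p x"
  unfolding phiR_def by (simp add: tau_small)

lemma phiR_C1c: "R > 0 \<Longrightarrow> p \<ge> 1 \<Longrightarrow> C1c_grad (\<lambda>x. phiR p R x - 3/2 * R) (gphiR p R)"
proof -
  assume R: "R > 0" and p: "p \<ge> 1"
  have d: "((\<lambda>x. phiR p R x - 3/2 * R) has_derivative (\<lambda>h. gphiR p R x \<bullet> h)) (at x)" for x
    using phiR_deriv[OF R, of p x] by (auto intro!: derivative_eq_intros)
  have sub: "{x. phiR p R x - 3/2 * R \<noteq> 0} \<subseteq> cball 0 (2 * R)"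
  proof
    fix x assume "x \<in> {x. phiR p R x - 3/2 * R \<noteq> 0}"
    then have "Gp p x / R < 2" using tau_big[of "Gp p x / R"] R by (force simp: phiR_def)
    then have "Gp p x < 2 * R" using R by (simp add: field_simps)
    then show "x \<in> cball 0 (2 * R)" using norm_le_Gp[OF p, of x] by simp
  qed
  have "bounded {x. phiR p R x - 3/2 * R \<noteq> 0}" by (rule bounded_subset[OF bounded_cball sub])
  then have "compact (closure {x. phiR p R x - 3/2 * R \<noteq> 0})" by (simp add: compact_closure)
  then show ?thesis unfolding C1c_grad_def using d gphiR_cont[OF R] by auto
qed

lemma grad_bound:
  assumes R: "R > 0" and p: "p \<ge> 1" and d: "d > 0"
  shows "\<bar>gphiR p R x \<bullet> v\<bar> \<le> 2 * p * d * phiR p R x + p * d powr (1 - p) * norm v powr p"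
proof -
  define w where "w = (1 + x \<bullet> x) powr (1/2)"
  define u where "u = Gp p x / R"
  have w0: "0 \<le> w" by (simp add: w_def)
  have u0: "0 \<le> u" using Gp_ge1[of p x] p R by (simp add: u_def)
  have t: "0 \<le> tau' u" "tau' u \<le> 1" by (rule tau'_range)+
  have "\<bar>gphiR p R x \<bullet> v\<bar> \<le> norm (gphiR p R x) * norm v" by (rule Cauchy_Schwarz_ineq2)
  also have "norm (gphiR p R x) = tau' u * norm (gGp p x)"
    using t by (simp add: gphiR_def u_def)
  also have "tau' u * norm (gGp p x) * norm v \<le> tau' u * (p * w powr (p - 1)) * norm v"
    using t norm_gGp[OF p, of x] by (intro mult_right_mono mult_left_mono) (auto simp: w_def)
  also have "\<dots> = tau' u * p * (w powr (p - 1) * norm v)" by (simp add: mult_ac)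
  also have "\<dots> \<le> tau' u * p * (d * w powr p + d powr (1 - p) * norm v powr p)"
    using t p by (intro mult_left_mono young_powr w0 d) auto
  also have "\<dots> = p * d * (tau' u * Gp p x) + tau' u * (p * d powr (1 - p) * norm v powr p)"
    by (simp add: Gp_w w_def algebra_simps)
  also have "\<dots> \<le> p * d * (2 * phiR p R x) + 1 * (p * d powr (1 - p) * norm v powr p)"
  proof (intro add_mono mult_left_mono mult_right_mono)
    have "tau' u * Gp p x = R * (tau' u * u)" using R by (simp add: u_def)
    also have "\<dots> \<le> R * (2 * tau u)" using R tau'_mult[OF u0] by (intro mult_left_mono) auto
    finally show "tau' u * Gp p x \<le> 2 * phiR p R x" by (simp add: phiR_def u_def)
  qed (use t p d in auto)
  finally show ?thesis by (simp add: algebra_simps)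
qed



lemma Pd_D: "\<mu> \<in> Pd \<Longrightarrow> prob_space \<mu> \<and> sets \<mu> = sets (borel :: 'a::euclidean_space measure)"
  by (auto simp: space_prob_algebra)

lemma Pd_integrable:
  fixes f :: "'a::euclidean_space \<Rightarrow> real"
  assumes \<mu>: "\<mu> \<in> Pd" and f: "f \<in> borel_measurable borel" and B: "\<And>x. \<bar>f x\<bar> \<le> B"
  shows "integrable \<mu> f"
proof -
  interpret prob_space \<mu> using Pd_D[OF \<mu>] by simp
  have fm: "f \<in> borel_measurable \<mu>" using f Pd_D[OF \<mu>] by (simp cong: measurable_cong_sets)
  show ?thesis by (rule integrable_const_bound[where B=B]) (use fm B in auto)
qed

lemma meas_Pd_integral:
  fixes f :: "'a::euclidean_space \<Rightarrow> real"
  assumes f: "f \<in> borel_measurable borel"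
  shows "(\<lambda>\<mu>. \<integral>x. f x \<partial>\<mu>) \<in> borel_measurable (prob_algebra (borel :: 'a measure))"
  unfolding prob_algebra_def by (intro measurable_restrict_space1 integral_measurable_subprob_algebra f)

lemma curve_M:
  assumes "narrow_curve T M" "t \<in> {0..T}"
  shows "sets (M t) = sets (prob_algebra (borel :: 'a::euclidean_space measure))"
    "space (M t) = Pd" "prob_space (M t)"
proof -
  have "M t \<in> space (prob_algebra (prob_algebra (borel :: 'a measure)))"
    using assms by (auto simp: narrow_curve_def)
  then show s: "sets (M t) = sets (prob_algebra (borel :: 'a::euclidean_space measure))" "prob_space (M t)"
    by (auto simp: space_prob_algebra)
  show "space (M t) = Pd" using sets_eq_imp_space_eq[OF s(1)] .
qed

definition Psi :: "real \<Rightarrow> real \<Rightarrow> real" where "Psi a s = a * arctan (s * inverse a)"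
definition Psi' :: "real \<Rightarrow> real \<Rightarrow> real" where "Psi' a s = inverse (1 + (s * inverse a)^2)"

lemma Psi_DERIV: "a > 0 \<Longrightarrow> (Psi a has_real_derivative Psi' a s) (at s)"
proof -
  assume a: "a > 0"
  have "((\<lambda>s. a * arctan (s * inverse a)) has_real_derivative a * (inverse (1 + (s * inverse a)^2) * inverse a)) (at s)"
    by (intro DERIV_cmult DERIV_chain2[OF DERIV_arctan]) (auto intro!: derivative_eq_intros)
  moreover have "a * (inverse (1 + (s * inverse a)^2) * inverse a) = Psi' a s"
    using a by (simp add: Psi'_def)
  ultimately show ?thesis by (simp add: Psi_def[abs_def])
qed

lemma Psi'_range: "0 < Psi' a s" "Psi' a s \<le> 1"
proof -
  have g: "1 \<le> 1 + (s * inverse a)^2" by simp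
  then show "0 < Psi' a s" unfolding Psi'_def by (intro positive_imp_inverse_positive) linarith
  show "Psi' a s \<le> 1" unfolding Psi'_def using g by (simp add: inverse_le_1_iff)
qed

lemma Psi'_mult: "a > 0 \<Longrightarrow> 0 \<le> s \<Longrightarrow> Psi' a s * s \<le> a / 2"
proof -
  assume a: "a > 0" and s: "0 \<le> s"
  define u where "u = s * inverse a"
  have "2 * u \<le> 1 + u^2" using sum_squares_bound[of 1 u] by (simp add: power2_eq_square)
  then have "u / (1 + u^2) \<le> 1/2" by (simp add: field_simps add_pos_nonneg)
  moreover have "Psi' a s * s = a * (u / (1 + u^2))"
  proof -
    have "s = a * u" using a by (simp add: u_def)
    then show ?thesis unfolding Psi'_def u_def[symmetric] by (simp add: divide_inverse mult_ac)
  qed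
  ultimately show ?thesis using a mult_left_mono[of "u / (1 + u^2)" "1/2" a] by simp
qed

lemma Psi_bound: "a > 0 \<Longrightarrow> \<bar>Psi a s\<bar> \<le> a * pi / 2"
proof -
  assume a: "a > 0"
  have "\<bar>arctan (s * inverse a)\<bar> \<le> pi / 2" using arctan_ubound[of "s * inverse a"] arctan_lbound[of "s * inverse a"] by auto
  then show ?thesis using a by (simp add: Psi_def abs_mult mult_left_mono)
qed

lemma Psi_cont: "continuous_on UNIV (Psi a)"
  unfolding Psi_def by (intro continuous_intros)

lemma Psi'_cont: "continuous_on UNIV (Psi' a)"
proof -
  have "1 + (s * inverse a)^2 \<noteq> 0" for s :: real by (metis add_pos_nonneg zero_le_power2 zero_less_one less_irrefl)
  then show ?thesis unfolding Psi'_def by (intro continuous_intros) auto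
qed

lemma C1b_Psi:
  assumes a: "a > 0"
  shows "C1b_partials 1 (\<lambda>y. Psi a (y 0 + c)) (\<lambda>i y. Psi' a (y 0 + c))"
proof -
  have b1: "bounded (range (\<lambda>y::nat \<Rightarrow> real. Psi a (y 0 + c)))"
    unfolding bounded_iff using Psi_bound[OF a] by (metis real_norm_def rangeE)
  have b2: "bounded (range (\<lambda>y::nat \<Rightarrow> real. Psi' a (y 0 + c)))"
    unfolding bounded_iff using Psi'_range by (metis abs_of_pos real_norm_def rangeE)
  have d: "((\<lambda>s. Psi a ((y(0 := s)) 0 + c)) has_real_derivative Psi' a (y 0 + c)) (at (y 0))" for y :: "nat \<Rightarrow> real"
  proof -
    have "((\<lambda>s. s + c) has_real_derivative 1) (at (y 0))" by (auto intro!: derivative_eq_intros)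
    from DERIV_chain2[OF Psi_DERIV[OF a] this] show ?thesis by simp
  qed
  have c: "continuous_on UNIV (\<lambda>y::nat \<Rightarrow> real. Psi' a (y 0 + c))"
    by (intro continuous_on_compose2[OF Psi'_cont] continuous_intros continuous_on_product_coordinates) auto
  show ?thesis unfolding C1b_partials_def using b1 b2 d c by auto
qed



lemma abs_int_le_nn:
  fixes f :: "'b \<Rightarrow> real"
  shows "ennreal \<bar>\<integral>x. f x \<partial>N\<bar> \<le> (\<integral>\<^sup>+x. ennreal \<bar>f x\<bar> \<partial>N)"
proof (cases "integrable N f")
  case True
  show ?thesis using integral_norm_bound_ennreal[OF True] by simp
next
  case False
  then show ?thesis by (simp add: not_integrable_integral_eq)
qed

definition mR :: "real \<Rightarrow> real \<Rightarrow> 'a::euclidean_space measure \<Rightarrow> real" where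
  "mR p R \<mu> = (\<integral>x. phiR p R x \<partial>\<mu>)"

lemma phiR_meas: "R > 0 \<Longrightarrow> phiR p R \<in> borel_measurable borel"
  by (rule borel_measurable_continuous_onI[OF phiR_cont])

lemma phiR_abs: "R > 0 \<Longrightarrow> p \<ge> 0 \<Longrightarrow> \<bar>phiR p R x\<bar> \<le> 3/2 * R"
  using phiR_nonneg[of R p x] phiR_le[of R p x] by auto

lemma phiR0_abs: "R > 0 \<Longrightarrow> p \<ge> 0 \<Longrightarrow> \<bar>phiR p R x - 3/2 * R\<bar> \<le> 3/2 * R"
  using phiR_nonneg[of R p x] phiR_le[of R p x] by auto

lemma mR_alt:
  assumes \<mu>: "\<mu> \<in> Pd" and R: "R > 0" and p: "p \<ge> 0"
  shows "(\<integral>x. phiR p R x - 3/2 * R \<partial>\<mu>) + 3/2 * R = mR p R \<mu>"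
proof -
  interpret prob_space \<mu> using Pd_D[OF \<mu>] by simp
  have i: "integrable \<mu> (phiR p R)" by (rule Pd_integrable[OF \<mu> phiR_meas[OF R] phiR_abs[OF R p]])
  have "(\<integral>x. phiR p R x - 3/2 * R \<partial>\<mu>) = mR p R \<mu> - 3/2 * R"
    using i by (simp add: mR_def prob_space)
  then show ?thesis by simp
qed

lemma mR_range: "\<mu> \<in> Pd \<Longrightarrow> R > 0 \<Longrightarrow> p \<ge> 0 \<Longrightarrow> 0 \<le> mR p R \<mu> \<and> mR p R \<mu> \<le> 3/2 * R"
proof -
  assume \<mu>: "\<mu> \<in> Pd" and R: "R > 0" and p: "p \<ge> 0"
  interpret prob_space \<mu> using Pd_D[OF \<mu>] by simp
  have i: "integrable \<mu> (phiR p R)" by (rule Pd_integrable[OF \<mu> phiR_meas[OF R] phiR_abs[OF R p]])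
  have "0 \<le> mR p R \<mu>" unfolding mR_def using phiR_nonneg[OF R p] by (intro integral_nonneg_AE) auto
  moreover have "mR p R \<mu> \<le> (\<integral>x. 3/2 * R \<partial>\<mu>)" unfolding mR_def
    using i phiR_le[OF R] by (intro integral_mono) auto
  ultimately show ?thesis by (simp add: prob_space)
qed

lemma mR_meas: "R > 0 \<Longrightarrow> mR p R \<in> borel_measurable (prob_algebra (borel :: 'a::euclidean_space measure))"
  unfolding mR_def[abs_def] by (rule meas_Pd_integral[OF phiR_meas])

lemma b_slice:
  fixes b :: "real \<Rightarrow> 'a::euclidean_space \<Rightarrow> 'a measure \<Rightarrow> 'a"
  assumes b_meas: "(\<lambda>(t, x, \<mu>). b t x \<mu>) \<in>
        borel_measurable (restrict_space borel {0..T} \<Otimes>\<^sub>M (borel :: 'a measure) \<Otimes>\<^sub>M prob_algebra (borel :: 'a measure))"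
    and t: "t \<in> {0..T}"
  shows "(\<lambda>(\<mu>, x). b t x \<mu>) \<in> borel_measurable (prob_algebra (borel :: 'a measure) \<Otimes>\<^sub>M (borel :: 'a measure))"
proof -
  have "(\<lambda>z. (t, snd z, fst z)) \<in> prob_algebra (borel :: 'a measure) \<Otimes>\<^sub>M (borel :: 'a measure) \<rightarrow>\<^sub>M
      restrict_space borel {0..T} \<Otimes>\<^sub>M (borel :: 'a measure) \<Otimes>\<^sub>M prob_algebra (borel :: 'a measure)"
    using t by (intro measurable_Pair measurable_const measurable_snd measurable_fst) (auto simp: space_restrict_space)
  from measurable_compose[OF this b_meas] show ?thesis by (simp add: case_prod_beta')
qed

lemma b_x_meas:
  fixes b :: "real \<Rightarrow> 'a::euclidean_space \<Rightarrow> 'a measure \<Rightarrow> 'a"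
  assumes b_meas: "(\<lambda>(t, x, \<mu>). b t x \<mu>) \<in>
        borel_measurable (restrict_space borel {0..T} \<Otimes>\<^sub>M (borel :: 'a measure) \<Otimes>\<^sub>M prob_algebra (borel :: 'a measure))"
    and t: "t \<in> {0..T}" and \<mu>: "\<mu> \<in> Pd"
  shows "(\<lambda>x. b t x \<mu>) \<in> borel_measurable \<mu>"
proof -
  have "(\<lambda>x. (\<lambda>(\<mu>, x). b t x \<mu>) (\<mu>, x)) \<in> borel_measurable (borel :: 'a measure)"
    by (rule measurable_compose[OF measurable_Pair1'[OF \<mu>] b_slice[OF b_meas t]])
  then show ?thesis using Pd_D[OF \<mu>] by (simp cong: measurable_cong_sets)
qed

lemma Bt_meas:
  fixes b :: "real \<Rightarrow> 'a::euclidean_space \<Rightarrow> 'a measure \<Rightarrow> 'a"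
  assumes b_meas: "(\<lambda>(t, x, \<mu>). b t x \<mu>) \<in>
        borel_measurable (restrict_space borel {0..T} \<Otimes>\<^sub>M (borel :: 'a measure) \<Otimes>\<^sub>M prob_algebra (borel :: 'a measure))"
    and t: "t \<in> {0..T}"
  shows "(\<lambda>\<mu>. \<integral>\<^sup>+x. ennreal (norm (b t x \<mu>) powr p) \<partial>\<mu>) \<in> borel_measurable (prob_algebra (borel :: 'a measure))"
proof -
  have m: "(\<lambda>(\<mu>, x). ennreal (norm (b t x \<mu>) powr p)) \<in> borel_measurable (prob_algebra (borel :: 'a measure) \<Otimes>\<^sub>M (borel :: 'a measure))"
    using b_slice[OF b_meas t] by (auto simp: case_prod_beta' intro!: measurable_compose[where g="\<lambda>v. ennreal (norm v powr p)"])
  have "(\<lambda>\<mu>. \<mu>) \<in> prob_algebra (borel :: 'a measure) \<rightarrow>\<^sub>M subprob_algebra borel"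
    by (rule measurable_prob_algebraD) (simp add: measurable_ident_sets)
  from nn_integral_measurable_subprob_algebra2[OF m this] show ?thesis by simp
qed



lemma narrow_cont_comp:
  fixes f :: "'a::euclidean_space \<Rightarrow> real" and F :: "real \<Rightarrow> real"
  assumes fc: "continuous_on UNIV f" and fb: "\<And>x. \<bar>f x\<bar> \<le> B" and Fc: "continuous_on UNIV F"
  shows "narrow_continuous (\<lambda>\<mu>. F ((\<integral>x. f x \<partial>\<mu>) + c))"
  unfolding narrow_continuous_def
proof (intro allI impI)
  fix \<mu>s :: "nat \<Rightarrow> 'a measure" and \<mu> :: "'a measure" assume a: "(\<forall>n. \<mu>s n \<in> Pd) \<and> \<mu> \<in> Pd \<and> narrow_conv \<mu>s \<mu>"
  have "bounded (range f)" unfolding bounded_iff using fb by auto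
  then have "(\<lambda>n. \<integral>x. f x \<partial>(\<mu>s n)) \<longlonglongrightarrow> (\<integral>x. f x \<partial>\<mu>)"
    using a fc unfolding narrow_conv_def by blast
  then have l: "(\<lambda>n. (\<integral>x. f x \<partial>(\<mu>s n)) + c) \<longlonglongrightarrow> (\<integral>x. f x \<partial>\<mu>) + c"
    by (intro tendsto_intros)
  have "isCont F ((\<integral>x. f x \<partial>\<mu>) + c)" using Fc by (simp add: continuous_on_eq_continuous_at)
  from isCont_tendsto_compose[OF this l] show "(\<lambda>n. F ((\<integral>x. f x \<partial>(\<mu>s n)) + c)) \<longlonglongrightarrow> F ((\<integral>x. f x \<partial>\<mu>) + c)" .
qed

lemma curve_cont:
  fixes M :: "real \<Rightarrow> 'a::euclidean_space measure measure" and f :: "'a \<Rightarrow> real" and F :: "real \<Rightarrow> real"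
  assumes curve: "narrow_curve T M"
    and fc: "continuous_on UNIV f" and fb: "\<And>x. \<bar>f x\<bar> \<le> B" and Fc: "continuous_on UNIV F"
    and Fb: "\<And>s. \<bar>F s\<bar> \<le> C"
  shows "continuous_on {0..T} (\<lambda>t. \<integral>\<mu>. F ((\<integral>x. f x \<partial>\<mu>) + c) \<partial>(M t))"
proof -
  let ?\<Phi> = "\<lambda>\<mu>. F ((\<integral>x. f x \<partial>\<mu>) + c)"
  have m: "?\<Phi> \<in> borel_measurable (prob_algebra borel)"
    by (intro borel_measurable_continuous_on[OF Fc] borel_measurable_add borel_measurable_const
        meas_Pd_integral borel_measurable_continuous_onI[OF fc])
  have bd: "bounded (?\<Phi> ` Pd)" unfolding bounded_iff by (rule exI[of _ C]) (use Fb in auto)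
  have nc: "narrow_continuous ?\<Phi>" by (rule narrow_cont_comp[OF fc fb Fc])
  show ?thesis unfolding continuous_on_sequentially comp_def
  proof (intro allI ballI impI)
    fix ts t assume a: "t \<in> {0..T}" "(\<forall>n. ts n \<in> {0..T}) \<and> ts \<longlonglongrightarrow> t"
    then show "(\<lambda>n. \<integral>\<mu>. ?\<Phi> \<mu> \<partial>(M (ts n))) \<longlonglongrightarrow> (\<integral>\<mu>. ?\<Phi> \<mu> \<partial>(M t))"
      using curve m bd nc unfolding narrow_curve_def by blast
  qed
qed



lemma core:
  fixes p T a R d Z t :: real
    and M :: "real \<Rightarrow> 'a::euclidean_space measure measure"
    and b :: "real \<Rightarrow> 'a \<Rightarrow> 'a measure \<Rightarrow> 'a"
  assumes p: "p \<ge> 1" and T: "T > 0" and a: "a > 0" and R: "R > 0" and d: "d > 0" and Z: "0 \<le> Z"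
    and curve: "narrow_curve T M"
    and b_meas: "(\<lambda>(t, x, \<mu>). b t x \<mu>) \<in>
        borel_measurable (restrict_space borel {0..T} \<Otimes>\<^sub>M (borel :: 'a measure) \<Otimes>\<^sub>M prob_algebra (borel :: 'a measure))"
    and b_int: "(\<integral>\<^sup>+ t. indicator {0..T} t *
        (\<integral>\<^sup>+ \<mu>. (\<integral>\<^sup>+ x. ennreal (norm (b t x \<mu>) powr p) \<partial>\<mu>) \<partial>(M t)) \<partial>lborel) < \<infinity>"
    and CE: "\<And>k \<phi> g \<Psi> D \<eta>.
        (\<forall>i<k. C1c_grad (\<phi> i) (g i)) \<Longrightarrow> C1b_partials k \<Psi> D \<Longrightarrow> test_fun T \<eta> \<Longrightarrow>
        - (LINT t:{0<..<T}|lborel. deriv \<eta> t *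
              (\<integral>\<mu>. \<Psi> (\<lambda>i. \<integral>x. \<phi> i x \<partial>\<mu>) \<partial>(M t)))
        = (LINT t:{0<..<T}|lborel. \<eta> t *
              (\<integral>\<mu>. (\<integral>x. (\<Sum>i<k. D i (\<lambda>j. \<integral>y. \<phi> j y \<partial>\<mu>) *\<^sub>R g i x) \<bullet> b t x \<mu> \<partial>\<mu>) \<partial>(M t)))"
    and Zb: "\<And>t. t \<in> {0..T} \<Longrightarrow> (\<integral>\<^sup>+\<mu>. ennreal (Psi' a (mR p R \<mu>) * mR p R \<mu>) \<partial>(M t)) \<le> ennreal Z"
    and t: "t \<in> {0..T}"
  shows "(\<integral>\<mu>. Psi a (mR p R \<mu>) \<partial>(M t)) - (\<integral>\<mu>. Psi a (mR p R \<mu>) \<partial>(M 0)) \<le>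
     2 * p * d * T * Z + p * d powr (1 - p) * enn2real (\<integral>\<^sup>+ t. indicator {0..T} t *
        (\<integral>\<^sup>+ \<mu>. (\<integral>\<^sup>+ x. ennreal (norm (b t x \<mu>) powr p) \<partial>\<mu>) \<partial>(M t)) \<partial>lborel)"
proof -
  define Ke where "Ke = (\<integral>\<^sup>+ t. indicator {0..T} t *
        (\<integral>\<^sup>+ \<mu>. (\<integral>\<^sup>+ x. ennreal (norm (b t x \<mu>) powr p) \<partial>\<mu>) \<partial>(M t)) \<partial>lborel)"
  define K where "K = enn2real Ke"
  have K0: "0 \<le> K" by (simp add: K_def)
  have KK: "Ke = ennreal K" using b_int unfolding K_def Ke_def by (simp add: less_top ennreal_enn2real)
  define c1 where "c1 = 2 * p * d * Z"
  define c2 where "c2 = p * d powr (1 - p)"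
  have c1: "0 \<le> c1" using p d Z by (simp add: c1_def)
  have c2: "0 \<le> c2" using p d by (simp add: c2_def)
  define L where "L = c1 * T + c2 * K"
  have L0: "0 \<le> L" using c1 c2 K0 T by (simp add: L_def)
  define f where "f t = (\<integral>\<mu>. Psi a ((\<integral>x. phiR p R x - 3/2 * R \<partial>\<mu>) + 3/2 * R) \<partial>(M t))" for t
  define h where "h t = (\<integral>\<mu>. (\<integral>x. (\<Sum>i<(1::nat). Psi' a ((\<integral>y. phiR p R y - 3/2 * R \<partial>\<mu>) + 3/2 * R) *\<^sub>R gphiR p R x) \<bullet> b t x \<mu> \<partial>\<mu>) \<partial>(M t))" for t
  have CEi: "- (LINT t:{0<..<T}|lborel. deriv \<eta> t * f t) = (LINT t:{0<..<T}|lborel. \<eta> t * h t)"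
    if \<eta>: "test_fun T \<eta>" for \<eta>
    unfolding f_def h_def
    using CE[of 1 "\<lambda>i x. phiR p R x - 3/2 * R" "\<lambda>i. gphiR p R" "\<lambda>y. Psi a (y 0 + 3/2 * R)" "\<lambda>i y. Psi' a (y 0 + 3/2 * R)" \<eta>]
      phiR_C1c[OF R p] C1b_Psi[OF a] \<eta> by simp
  have fc: "continuous_on {0..T} f"
    unfolding f_def[abs_def]
  proof (rule curve_cont[OF curve])
    show "continuous_on UNIV (\<lambda>x. phiR p R x - 3/2 * R)" by (intro continuous_intros phiR_cont R)
    show "\<bar>phiR p R x - 3/2 * R\<bar> \<le> 3/2 * R" for x using phiR0_abs[OF R, of p x] p by simp
    show "continuous_on UNIV (Psi a)" by (rule Psi_cont)
    show "\<bar>Psi a s\<bar> \<le> a * pi / 2" for s by (rule Psi_bound[OF a])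
  qed
  define Q where "Q t = (\<integral>\<^sup>+ \<mu>. (\<integral>\<^sup>+ x. ennreal (norm (b t x \<mu>) powr p) \<partial>\<mu>) \<partial>(M t))" for t
  have inner: "ennreal \<bar>\<integral>x. (\<Sum>i<(1::nat). Psi' a ((\<integral>y. phiR p R y - 3/2 * R \<partial>\<mu>) + 3/2 * R) *\<^sub>R gphiR p R x) \<bullet> b t x \<mu> \<partial>\<mu>\<bar>
      \<le> ennreal (2 * p * d) * ennreal (Psi' a (mR p R \<mu>) * mR p R \<mu>) + ennreal c2 * (\<integral>\<^sup>+ x. ennreal (norm (b t x \<mu>) powr p) \<partial>\<mu>)"
    if t: "t \<in> {0..T}" and \<mu>: "\<mu> \<in> Pd" for t \<mu>
  proof -
    define P where "P = Psi' a (mR p R \<mu>)"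
    have PP: "Psi' a ((\<integral>y. phiR p R y - 3/2 * R \<partial>\<mu>) + 3/2 * R) = P"
      using mR_alt[OF \<mu> R] p by (simp add: P_def)
    have P: "0 \<le> P" "P \<le> 1" using Psi'_range[of a "mR p R \<mu>"] by (auto simp: P_def)
    have sets: "sets \<mu> = sets borel" using Pd_D[OF \<mu>] by simp
    have phim: "phiR p R \<in> borel_measurable \<mu>" using phiR_meas[OF R] sets by (simp cong: measurable_cong_sets)
    have bm: "(\<lambda>x. b t x \<mu>) \<in> borel_measurable \<mu>" by (rule b_x_meas[OF b_meas t \<mu>])
    have "ennreal \<bar>\<integral>x. (\<Sum>i<(1::nat). Psi' a ((\<integral>y. phiR p R y - 3/2 * R \<partial>\<mu>) + 3/2 * R) *\<^sub>R gphiR p R x) \<bullet> b t x \<mu> \<partial>\<mu>\<bar>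
        \<le> (\<integral>\<^sup>+x. ennreal \<bar>(\<Sum>i<(1::nat). Psi' a ((\<integral>y. phiR p R y - 3/2 * R \<partial>\<mu>) + 3/2 * R) *\<^sub>R gphiR p R x) \<bullet> b t x \<mu>\<bar> \<partial>\<mu>)"
      by (rule abs_int_le_nn)
    also have "\<dots> \<le> (\<integral>\<^sup>+x. ennreal (2 * p * d) * ennreal (P * phiR p R x) + ennreal c2 * ennreal (norm (b t x \<mu>) powr p) \<partial>\<mu>)"
    proof (rule nn_integral_mono)
      fix x
      have "\<bar>(\<Sum>i<(1::nat). Psi' a ((\<integral>y. phiR p R y - 3/2 * R \<partial>\<mu>) + 3/2 * R) *\<^sub>R gphiR p R x) \<bullet> b t x \<mu>\<bar>
          = P * \<bar>gphiR p R x \<bullet> b t x \<mu>\<bar>" unfolding PP using P by (simp add: abs_mult)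
      also have "\<dots> \<le> P * (2 * p * d * phiR p R x + p * d powr (1 - p) * norm (b t x \<mu>) powr p)"
        using P by (intro mult_left_mono grad_bound R p d) auto
      also have "\<dots> \<le> 2 * p * d * (P * phiR p R x) + c2 * norm (b t x \<mu>) powr p"
      proof -
        have "P * (c2 * norm (b t x \<mu>) powr p) \<le> 1 * (c2 * norm (b t x \<mu>) powr p)"
          using P c2 by (intro mult_right_mono) auto
        then show ?thesis by (simp add: c2_def algebra_simps)
      qed
      finally have le: "\<bar>(\<Sum>i<(1::nat). Psi' a ((\<integral>y. phiR p R y - 3/2 * R \<partial>\<mu>) + 3/2 * R) *\<^sub>R gphiR p R x) \<bullet> b t x \<mu>\<bar>
          \<le> 2 * p * d * (P * phiR p R x) + c2 * norm (b t x \<mu>) powr p" .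
      have nn: "0 \<le> 2 * p * d * (P * phiR p R x)" "0 \<le> c2 * norm (b t x \<mu>) powr p"
        using P p d c2 phiR_nonneg[OF R, of p x] by auto
      have "ennreal \<bar>(\<Sum>i<(1::nat). Psi' a ((\<integral>y. phiR p R y - 3/2 * R \<partial>\<mu>) + 3/2 * R) *\<^sub>R gphiR p R x) \<bullet> b t x \<mu>\<bar>
          \<le> ennreal (2 * p * d * (P * phiR p R x) + c2 * norm (b t x \<mu>) powr p)"
        using le by (rule ennreal_leI)
      also have "\<dots> = ennreal (2 * p * d) * ennreal (P * phiR p R x) + ennreal c2 * ennreal (norm (b t x \<mu>) powr p)"
        using nn P p d c2 phiR_nonneg[OF R, of p x] by (simp add: ennreal_plus ennreal_mult[symmetric] mult.assoc)
      finally show "ennreal \<bar>(\<Sum>i<(1::nat). Psi' a ((\<integral>y. phiR p R y - 3/2 * R \<partial>\<mu>) + 3/2 * R) *\<^sub>R gphiR p R x) \<bullet> b t x \<mu>\<bar>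
          \<le> ennreal (2 * p * d) * ennreal (P * phiR p R x) + ennreal c2 * ennreal (norm (b t x \<mu>) powr p)" .
    qed
    also have "\<dots> = ennreal (2 * p * d) * (\<integral>\<^sup>+x. ennreal (P * phiR p R x) \<partial>\<mu>) + ennreal c2 * (\<integral>\<^sup>+x. ennreal (norm (b t x \<mu>) powr p) \<partial>\<mu>)"
      using phim bm by (simp add: nn_integral_add nn_integral_cmult)
    also have "(\<integral>\<^sup>+x. ennreal (P * phiR p R x) \<partial>\<mu>) = ennreal (P * mR p R \<mu>)"
    proof -
      have i: "integrable \<mu> (\<lambda>x. P * phiR p R x)"
        using Pd_integrable[OF \<mu> phiR_meas[OF R] phiR_abs[OF R]] p by simp
      have "(\<integral>\<^sup>+x. ennreal (P * phiR p R x) \<partial>\<mu>) = ennreal (\<integral>x. P * phiR p R x \<partial>\<mu>)"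
      proof (rule nn_integral_eq_integral[OF i], rule AE_I2)
        fix x show "0 \<le> P * phiR p R x" using P phiR_nonneg[OF R, of p x] p by simp
      qed
      then show ?thesis by (simp add: mR_def)
    qed
    finally show ?thesis by (simp add: P_def)
  qed
  have pt: "ennreal \<bar>h t\<bar> \<le> ennreal c1 + ennreal c2 * Q t" if t: "t \<in> {0..T}" for t
  proof -
    have sM: "space (M t) = Pd" "sets (M t) = sets (prob_algebra borel)" using curve_M[OF curve t] by auto
    have m1: "(\<lambda>\<mu>. ennreal (Psi' a (mR p R \<mu>) * mR p R \<mu>)) \<in> borel_measurable (M t)"
    proof -
      have "(\<lambda>\<mu>. ennreal (Psi' a (mR p R \<mu>) * mR p R \<mu>)) \<in> borel_measurable (prob_algebra (borel :: 'a measure))"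
        by (intro measurable_compose[OF _ measurable_ennreal] borel_measurable_times
            borel_measurable_continuous_on[OF Psi'_cont] mR_meas[OF R])
      then show ?thesis using sM by (simp cong: measurable_cong_sets)
    qed
    have m2: "(\<lambda>\<mu>. \<integral>\<^sup>+x. ennreal (norm (b t x \<mu>) powr p) \<partial>\<mu>) \<in> borel_measurable (M t)"
      using Bt_meas[OF b_meas t] sM by (simp cong: measurable_cong_sets)
    have "ennreal \<bar>h t\<bar> \<le> (\<integral>\<^sup>+\<mu>. ennreal \<bar>\<integral>x. (\<Sum>i<(1::nat). Psi' a ((\<integral>y. phiR p R y - 3/2 * R \<partial>\<mu>) + 3/2 * R) *\<^sub>R gphiR p R x) \<bullet> b t x \<mu> \<partial>\<mu>\<bar> \<partial>(M t))"
      unfolding h_def by (rule abs_int_le_nn)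
    also have "\<dots> \<le> (\<integral>\<^sup>+\<mu>. ennreal (2 * p * d) * ennreal (Psi' a (mR p R \<mu>) * mR p R \<mu>) + ennreal c2 * (\<integral>\<^sup>+ x. ennreal (norm (b t x \<mu>) powr p) \<partial>\<mu>) \<partial>(M t))"
      by (rule nn_integral_mono) (use inner[OF t] sM in auto)
    also have "\<dots> = ennreal (2 * p * d) * (\<integral>\<^sup>+\<mu>. ennreal (Psi' a (mR p R \<mu>) * mR p R \<mu>) \<partial>(M t)) + ennreal c2 * Q t"
      using m1 m2 by (simp add: nn_integral_add nn_integral_cmult Q_def)
    also have "\<dots> \<le> ennreal (2 * p * d) * ennreal Z + ennreal c2 * Q t"
      using Zb[OF t] by (intro add_mono mult_left_mono) auto
    also have "ennreal (2 * p * d) * ennreal Z = ennreal c1"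
      using p d Z by (simp add: c1_def ennreal_mult[symmetric])
    finally show ?thesis .
  qed
  have hb: "(\<integral>\<^sup>+ t. indicator {0<..<T} t * ennreal \<bar>h t\<bar> \<partial>lborel) \<le> ennreal L"
  proof -
    have "(\<integral>\<^sup>+ t. indicator {0<..<T} t * ennreal \<bar>h t\<bar> \<partial>lborel) \<le>
        (\<integral>\<^sup>+ t. indicator {0<..<T} t * ennreal c1 + ennreal c2 * (indicator {0..T} t * Q t) \<partial>lborel)"
    proof (rule nn_integral_mono)
      fix u
      show "indicator {0<..<T} u * ennreal \<bar>h u\<bar> \<le> indicator {0<..<T} u * ennreal c1 + ennreal c2 * (indicator {0..T} u * Q u)"
      proof (cases "u \<in> {0<..<T}")
        case True
        then have "u \<in> {0..T}" by auto
        then show ?thesis using True pt[of u] by simp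
      qed simp
    qed
    also have "\<dots> \<le> (\<integral>\<^sup>+ t. indicator {0<..<T} t * ennreal c1 \<partial>lborel) + (\<integral>\<^sup>+ t. ennreal c2 * (indicator {0..T} t * Q t) \<partial>lborel)"
      by (rule nn_integral_add_le) (auto simp: indicator_def)
    also have "(\<integral>\<^sup>+ t. indicator {0<..<T} t * ennreal c1 \<partial>lborel) = ennreal c1 * ennreal T"
      using T nn_integral_cmult_indicator[of "{0<..<T}" lborel "ennreal c1"] by (simp add: mult.commute)
    also have "(\<integral>\<^sup>+ t. ennreal c2 * (indicator {0..T} t * Q t) \<partial>lborel) \<le> ennreal c2 * Ke"
      unfolding Ke_def Q_def by (rule nn_integral_cmult_le[OF c2])
    also have "ennreal c1 * ennreal T + ennreal c2 * Ke = ennreal L"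
      using c1 c2 K0 T by (simp add: KK L_def ennreal_mult[symmetric] ennreal_plus)
    finally show ?thesis by simp
  qed
  have "f t - f 0 \<le> L" using incr_bound[OF fc L0 CEi hb, of 0 t] t by auto
  moreover have "f s = (\<integral>\<mu>. Psi a (mR p R \<mu>) \<partial>(M s))" if s: "s \<in> {0..T}" for s
  proof -
    have p0: "0 \<le> p" using p by simp
    show ?thesis unfolding f_def
    proof (rule Bochner_Integration.integral_cong[OF refl])
      fix \<mu> assume "\<mu> \<in> space (M s)"
      then have "\<mu> \<in> Pd" using curve_M[OF curve s] by simp
      from mR_alt[OF this R p0] show "Psi a ((\<integral>x. phiR p R x - 3/2 * R \<partial>\<mu>) + 3/2 * R) = Psi a (mR p R \<mu>)"
        by simp
    qed
  qed
  ultimately show ?thesis using t T by (simp add: L_def c1_def c2_def K_def Ke_def algebra_simps)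
qed



definition Gm :: "real \<Rightarrow> 'a::euclidean_space measure \<Rightarrow> ennreal" where
  "Gm p \<mu> = (\<integral>\<^sup>+x. ennreal (Gp p x) \<partial>\<mu>)"

lemma Gp_meas: "Gp p \<in> borel_measurable borel"
  by (rule borel_measurable_continuous_onI[OF Gp_cont])

lemma Gm_meas: "Gm p \<in> borel_measurable (prob_algebra (borel :: 'a::euclidean_space measure))"
  unfolding Gm_def[abs_def] prob_algebra_def
  by (intro measurable_restrict_space1 nn_integral_measurable_subprob_algebra measurable_compose[OF Gp_meas measurable_ennreal])

lemma pmom_meas: "pmom p \<in> borel_measurable (prob_algebra (borel :: 'a::euclidean_space measure))"
  unfolding pmom_def[abs_def] prob_algebra_def
  by (intro measurable_restrict_space1 nn_integral_measurable_subprob_algebra) measurable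

lemma pmom_le_Gm: "p \<ge> 1 \<Longrightarrow> pmom p \<mu> \<le> Gm p \<mu>"
  unfolding pmom_def Gm_def by (intro nn_integral_mono ennreal_leI normp_le_Gp)

lemma Gm_le:
  assumes p: "p \<ge> 1" and \<mu>: "\<mu> \<in> Pd"
  shows "Gm p \<mu> \<le> ennreal (2 powr (p / 2)) * (1 + pmom p \<mu>)"
proof -
  interpret prob_space \<mu> using Pd_D[OF \<mu>] by simp
  have sets: "sets \<mu> = sets borel" using Pd_D[OF \<mu>] by simp
  have m: "(\<lambda>x. ennreal (norm x powr p)) \<in> borel_measurable \<mu>"
    using sets by (simp cong: measurable_cong_sets)
  have "Gm p \<mu> \<le> (\<integral>\<^sup>+x. ennreal (2 powr (p / 2)) * (1 + ennreal (norm x powr p)) \<partial>\<mu>)"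
    unfolding Gm_def
  proof (rule nn_integral_mono)
    fix x
    have "ennreal (Gp p x) \<le> ennreal (2 powr (p / 2) * (1 + norm x powr p))"
      using Gp_le[OF p, of x] by (rule ennreal_leI)
    also have "\<dots> = ennreal (2 powr (p / 2)) * (1 + ennreal (norm x powr p))"
      by (simp add: ennreal_mult ennreal_plus)
    finally show "ennreal (Gp p x) \<le> ennreal (2 powr (p / 2)) * (1 + ennreal (norm x powr p))" .
  qed
  also have "\<dots> = ennreal (2 powr (p / 2)) * (1 + pmom p \<mu>)"
    using m by (simp add: nn_integral_cmult nn_integral_add emeasure_space_1 pmom_def)
  finally show ?thesis .
qed

lemma mR_nn:
  assumes \<mu>: "\<mu> \<in> Pd" and R: "R > 0" and p: "p \<ge> 1"
  shows "ennreal (mR p R \<mu>) = (\<integral>\<^sup>+x. ennreal (phiR p R x) \<partial>\<mu>)"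
proof -
  have i: "integrable \<mu> (phiR p R)" using Pd_integrable[OF \<mu> phiR_meas[OF R] phiR_abs[OF R]] p by simp
  show ?thesis unfolding mR_def
  proof (rule nn_integral_eq_integral[OF i, symmetric], rule AE_I2)
    fix x show "0 \<le> phiR p R x" using phiR_nonneg[OF R, of p x] p by simp
  qed
qed

lemma mR_le_Gm:
  assumes \<mu>: "\<mu> \<in> Pd" and R: "R > 0" and p: "p \<ge> 1"
  shows "ennreal (mR p R \<mu>) \<le> Gm p \<mu>"
  unfolding mR_nn[OF assms] Gm_def by (intro nn_integral_mono ennreal_leI phiR_le_Gp R)

lemma Gm_liminf:
  assumes \<mu>: "\<mu> \<in> Pd" and p: "p \<ge> 1"
  shows "Gm p \<mu> \<le> liminf (\<lambda>n. ennreal (mR p (real n + 1) \<mu>))"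
proof -
  have sets: "sets \<mu> = sets borel" using Pd_D[OF \<mu>] by simp
  have lim: "liminf (\<lambda>n. ennreal (phiR p (real n + 1) x)) = ennreal (Gp p x)" for x
  proof (rule lim_imp_Liminf)
    show "((\<lambda>n. ennreal (phiR p (real n + 1) x)) \<longlongrightarrow> ennreal (Gp p x)) sequentially"
    proof (rule tendsto_eventually)
      obtain N :: nat where N: "Gp p x \<le> real N" using real_arch_simple by blast
      show "\<forall>\<^sub>F n in sequentially. ennreal (phiR p (real n + 1) x) = ennreal (Gp p x)"
        using eventually_ge_at_top[of N]
      proof eventually_elim
        case (elim n)
        then have "Gp p x \<le> real n + 1" using N by linarith
        then show ?case by (simp add: phiR_eq_Gp)
      qed
    qed
  qed simp
  have "Gm p \<mu> = (\<integral>\<^sup>+x. liminf (\<lambda>n. ennreal (phiR p (real n + 1) x)) \<partial>\<mu>)"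
    unfolding Gm_def lim ..
  also have "\<dots> \<le> liminf (\<lambda>n. \<integral>\<^sup>+x. ennreal (phiR p (real n + 1) x) \<partial>\<mu>)"
  proof (rule nn_integral_liminf)
    fix i :: nat
    have "(\<lambda>x. ennreal (phiR p (real i + 1) x)) \<in> borel_measurable borel"
      by (intro measurable_compose[OF phiR_meas measurable_ennreal]) simp
    then show "(\<lambda>x. ennreal (phiR p (real i + 1) x)) \<in> borel_measurable \<mu>"
      using sets by (simp cong: measurable_cong_sets)
  qed
  also have "\<dots> = liminf (\<lambda>n. ennreal (mR p (real n + 1) \<mu>))"
    using mR_nn[OF \<mu> _ p] by simp
  finally show ?thesis .
qed



lemma Psi_nonneg: "a > 0 \<Longrightarrow> 0 \<le> s \<Longrightarrow> 0 \<le> Psi a s"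
  unfolding Psi_def by (simp add: arctan_monotone'[of 0, simplified])

lemma Psi_mono: "a > 0 \<Longrightarrow> s \<le> s' \<Longrightarrow> Psi a s \<le> Psi a s'"
  unfolding Psi_def by (intro mult_left_mono arctan_monotone' mult_right_mono) auto

lemma Psi_meas: "R > 0 \<Longrightarrow> (\<lambda>\<mu>. Psi a (mR p R \<mu>)) \<in> borel_measurable (prob_algebra (borel :: 'a::euclidean_space measure))"
  by (rule borel_measurable_continuous_on[OF Psi_cont mR_meas])

lemma int_bounded_Pd:
  fixes f :: "'a::euclidean_space measure \<Rightarrow> real"
  assumes "narrow_curve T M" "s \<in> {0..T}" "f \<in> borel_measurable (prob_algebra borel)" "\<And>\<mu>. \<mu> \<in> Pd \<Longrightarrow> \<bar>f \<mu>\<bar> \<le> B"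
  shows "integrable (M s) f"
proof -
  note sM = curve_M[OF assms(1,2)]
  interpret prob_space "M s" by (rule sM(3))
  show ?thesis
    by (rule integrable_const_bound[where B=B]) (use assms(3,4) sM in \<open>auto cong: measurable_cong_sets\<close>)
qed



lemma real_Suc_at_top: "filterlim (\<lambda>j. real j + 1) at_top sequentially"
proof -
  have "filterlim (\<lambda>j. real (Suc j)) at_top sequentially"
    using filterlim_sequentially_Suc[of real at_top] filterlim_real_sequentially by simp
  then show ?thesis by (simp add: add.commute)
qed

lemma part1:
  fixes p T t :: real
    and M :: "real \<Rightarrow> 'a::euclidean_space measure measure"
    and b :: "real \<Rightarrow> 'a \<Rightarrow> 'a measure \<Rightarrow> 'a"
  assumes p: "p \<ge> 1" and T: "T > 0"
    and curve: "narrow_curve T M"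
    and b_meas: "(\<lambda>(t, x, \<mu>). b t x \<mu>) \<in>
        borel_measurable (restrict_space borel {0..T} \<Otimes>\<^sub>M (borel :: 'a measure) \<Otimes>\<^sub>M prob_algebra (borel :: 'a measure))"
    and b_int: "(\<integral>\<^sup>+ t. indicator {0..T} t *
        (\<integral>\<^sup>+ \<mu>. (\<integral>\<^sup>+ x. ennreal (norm (b t x \<mu>) powr p) \<partial>\<mu>) \<partial>(M t)) \<partial>lborel) < \<infinity>"
    and CE: "\<And>k \<phi> g \<Psi> D \<eta>.
        (\<forall>i<k. C1c_grad (\<phi> i) (g i)) \<Longrightarrow> C1b_partials k \<Psi> D \<Longrightarrow> test_fun T \<eta> \<Longrightarrow>
        - (LINT t:{0<..<T}|lborel. deriv \<eta> t *
              (\<integral>\<mu>. \<Psi> (\<lambda>i. \<integral>x. \<phi> i x \<partial>\<mu>) \<partial>(M t)))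
        = (LINT t:{0<..<T}|lborel. \<eta> t *
              (\<integral>\<mu>. (\<integral>x. (\<Sum>i<k. D i (\<lambda>j. \<integral>y. \<phi> j y \<partial>\<mu>) *\<^sub>R g i x) \<bullet> b t x \<mu> \<partial>\<mu>) \<partial>(M t)))"
    and h0: "AE \<mu> in M 0. pmom p \<mu> < \<infinity>"
    and t: "t \<in> {0..T}"
  shows "AE \<mu> in M t. pmom p \<mu> < \<infinity>"
proof -
  define K where "K = enn2real (\<integral>\<^sup>+ t. indicator {0..T} t *
        (\<integral>\<^sup>+ \<mu>. (\<integral>\<^sup>+ x. ennreal (norm (b t x \<mu>) powr p) \<partial>\<mu>) \<partial>(M t)) \<partial>lborel)"
  have K0: "0 \<le> K" by (simp add: K_def)
  have t0: "0 \<in> {0..T}" using T by simp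
  note sMt = curve_M[OF curve t]
  note sM0 = curve_M[OF curve t0]
  interpret Mt: prob_space "M t" by (rule sMt(3))
  interpret M0: prob_space "M 0" by (rule sM0(3))
  define N where "N = {\<mu> \<in> space (M t). Gm p \<mu> = \<infinity>}"
  have Nm: "N \<in> sets (M t)"
  proof -
    have "Gm p \<in> borel_measurable (M t)" using Gm_meas sMt by (simp cong: measurable_cong_sets)
    then show ?thesis unfolding N_def by measurable
  qed
  define J0 where "J0 a = (\<integral>\<mu>. arctan (enn2real (Gm p \<mu>) * inverse a) \<partial>(M 0))" for a
  have G0: "AE \<mu> in M 0. Gm p \<mu> < \<infinity>"
    using h0
  proof (rule AE_mp, intro AE_I2 impI)
    fix \<mu> assume \<mu>: "\<mu> \<in> space (M 0)" and "pmom p \<mu> < \<infinity>"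
    then have "ennreal (2 powr (p / 2)) * (1 + pmom p \<mu>) < \<infinity>"
      by (simp add: ennreal_mult_less_top less_top)
    then show "Gm p \<mu> < \<infinity>" using Gm_le[OF p] \<mu> sM0 by (auto intro: le_less_trans)
  qed
  have key: "pi / 2 * measure (M t) N \<le> J0 a + p * d * T + p * d powr (1 - p) * K / a"
    if a: "a > 0" and d: "d > 0" for a d
  proof -
    define I where "I s n = (\<integral>\<mu>. Psi a (mR p (real n + 1) \<mu>) \<partial>(M s))" for s n
    have Rpos: "real n + 1 > 0" for n :: nat by simp
    have ineq: "I t n - I 0 n \<le> 2 * p * d * T * (a / 2) + p * d powr (1 - p) * K" for n
      unfolding I_def K_def
    proof (rule core[OF p T a Rpos d _ curve b_meas b_int CE _ t])
      show "0 \<le> a / 2" using a by simp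
      fix s assume s: "s \<in> {0..T}"
      note sMs = curve_M[OF curve s]
      interpret Ms: prob_space "M s" by (rule sMs(3))
      have "(\<integral>\<^sup>+\<mu>. ennreal (Psi' a (mR p (real n + 1) \<mu>) * mR p (real n + 1) \<mu>) \<partial>(M s)) \<le> (\<integral>\<^sup>+\<mu>. ennreal (a / 2) \<partial>(M s))"
      proof (rule nn_integral_mono)
        fix \<mu> assume "\<mu> \<in> space (M s)"
        then have "\<mu> \<in> Pd" using sMs by simp
        then have "0 \<le> mR p (real n + 1) \<mu>" using mR_range[of \<mu> "real n + 1" p] p by simp
        then show "ennreal (Psi' a (mR p (real n + 1) \<mu>) * mR p (real n + 1) \<mu>) \<le> ennreal (a / 2)"
          by (intro ennreal_leI Psi'_mult[OF a])
      qed
      also have "\<dots> = ennreal (a / 2)" by (simp add: Ms.emeasure_space_1)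
      finally show "(\<integral>\<^sup>+\<mu>. ennreal (Psi' a (mR p (real n + 1) \<mu>) * mR p (real n + 1) \<mu>) \<partial>(M s)) \<le> ennreal (a / 2)" .
    qed
    have intPsi: "integrable (M s) (\<lambda>\<mu>. Psi a (mR p (real n + 1) \<mu>))" if "s \<in> {0..T}" for s n
      by (rule int_bounded_Pd[OF curve that Psi_meas[OF Rpos] Psi_bound[OF a]])
    have up0: "I 0 n \<le> a * J0 a" for n
    proof -
      have i2: "integrable (M 0) (\<lambda>\<mu>. Psi a (enn2real (Gm p \<mu>)))"
      proof (rule int_bounded_Pd[OF curve t0 _ Psi_bound[OF a]])
        show "(\<lambda>\<mu>. Psi a (enn2real (Gm p \<mu>))) \<in> borel_measurable (prob_algebra borel)"
          by (intro borel_measurable_continuous_on[OF Psi_cont] borel_measurable_enn2real Gm_meas)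
      qed
      have "I 0 n \<le> (\<integral>\<mu>. Psi a (enn2real (Gm p \<mu>)) \<partial>(M 0))"
        unfolding I_def
      proof (rule integral_mono_AE[OF intPsi[OF t0] i2])
        show "AE \<mu> in M 0. Psi a (mR p (real n + 1) \<mu>) \<le> Psi a (enn2real (Gm p \<mu>))"
          using G0
        proof (rule AE_mp, intro AE_I2 impI)
          fix \<mu> assume \<mu>: "\<mu> \<in> space (M 0)" and fin: "Gm p \<mu> < \<infinity>"
          then have \<mu>': "\<mu> \<in> Pd" using sM0 by simp
          have "ennreal (mR p (real n + 1) \<mu>) \<le> Gm p \<mu>" by (rule mR_le_Gm[OF \<mu>' Rpos p])
          then have "enn2real (ennreal (mR p (real n + 1) \<mu>)) \<le> enn2real (Gm p \<mu>)"
            using fin by (intro enn2real_mono) auto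
          then have "mR p (real n + 1) \<mu> \<le> enn2real (Gm p \<mu>)"
            using mR_range[OF \<mu>' Rpos, of p] p by simp
          then show "Psi a (mR p (real n + 1) \<mu>) \<le> Psi a (enn2real (Gm p \<mu>))" by (rule Psi_mono[OF a])
        qed
      qed
      also have "\<dots> = a * J0 a" unfolding J0_def Psi_def by simp
      finally show ?thesis .
    qed
    have lowt: "(\<integral>\<mu>. indicator N \<mu> * Psi a (mR p (real n + 1) \<mu>) \<partial>(M t)) \<le> I t n" for n
      unfolding I_def
    proof (rule integral_mono[OF _ intPsi[OF t]])
      show "integrable (M t) (\<lambda>\<mu>. indicator N \<mu> * Psi a (mR p (real n + 1) \<mu>))"
        using integrable_real_mult_indicator[OF Nm intPsi[OF t, of n]] by (simp add: mult.commute)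
      fix \<mu> assume "\<mu> \<in> space (M t)"
      then have "0 \<le> Psi a (mR p (real n + 1) \<mu>)" using sMt mR_range[of \<mu> "real n + 1" p] p
        by (intro Psi_nonneg[OF a]) auto
      then show "indicator N \<mu> * Psi a (mR p (real n + 1) \<mu>) \<le> Psi a (mR p (real n + 1) \<mu>)"
        by (auto simp: indicator_def)
    qed
    have lim: "(\<lambda>n. \<integral>\<mu>. indicator N \<mu> * Psi a (mR p (real n + 1) \<mu>) \<partial>(M t)) \<longlonglongrightarrow> (\<integral>\<mu>. indicator N \<mu> * (a * (pi / 2)) \<partial>(M t))"
    proof (rule integral_dominated_convergence[where w="\<lambda>_. a * (pi / 2)"])
      show "(\<lambda>\<mu>. indicator N \<mu> * (a * (pi / 2))) \<in> borel_measurable (M t)" using Nm by measurable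
      show "(\<lambda>\<mu>. indicator N \<mu> * Psi a (mR p (real n + 1) \<mu>)) \<in> borel_measurable (M t)" for n
        using intPsi[OF t] Nm by (intro borel_measurable_times) auto
      show "integrable (M t) (\<lambda>_. a * (pi / 2))" by simp
      show "AE \<mu> in M t. norm (indicator N \<mu> * Psi a (mR p (real n + 1) \<mu>)) \<le> a * (pi / 2)" for n
        using Psi_bound[OF a] a pi_gt_zero by (intro AE_I2) (auto simp: indicator_def abs_mult)
      show "AE \<mu> in M t. (\<lambda>n. indicator N \<mu> * Psi a (mR p (real n + 1) \<mu>)) \<longlonglongrightarrow> indicator N \<mu> * (a * (pi / 2))"
      proof (rule AE_I2)
        fix \<mu> assume \<mu>: "\<mu> \<in> space (M t)"
        show "(\<lambda>n. indicator N \<mu> * Psi a (mR p (real n + 1) \<mu>)) \<longlonglongrightarrow> indicator N \<mu> * (a * (pi / 2))"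
        proof (cases "\<mu> \<in> N")
          case True
          then have \<mu>': "\<mu> \<in> Pd" and inf: "Gm p \<mu> = \<infinity>" using sMt by (auto simp: N_def)
          have li: "liminf (\<lambda>n. ennreal (mR p (real n + 1) \<mu>)) = \<infinity>"
            using Gm_liminf[OF \<mu>' p] inf by (simp add: top_unique)
          have ls: "limsup (\<lambda>n. ennreal (mR p (real n + 1) \<mu>)) = \<infinity>"
            using Liminf_le_Limsup[of sequentially "\<lambda>n. ennreal (mR p (real n + 1) \<mu>)"] li
            by (simp add: top_unique)
          have "(\<lambda>n. ennreal (mR p (real n + 1) \<mu>)) \<longlonglongrightarrow> \<infinity>"
            using li ls by (simp add: tendsto_iff_Liminf_eq_Limsup)
          then have ft: "filterlim (\<lambda>n. mR p (real n + 1) \<mu>) at_top sequentially"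
            by (simp add: ennreal_tendsto_top_eq_at_top)
          have "filterlim (\<lambda>n. mR p (real n + 1) \<mu> * inverse a) at_top sequentially"
            using filterlim_at_top_mult_tendsto_pos[OF tendsto_const[of "inverse a" sequentially] _ ft] a by simp
          then have "(\<lambda>n. arctan (mR p (real n + 1) \<mu> * inverse a)) \<longlonglongrightarrow> pi / 2"
            by (rule filterlim_compose[OF tendsto_arctan_at_top])
          then have "(\<lambda>n. Psi a (mR p (real n + 1) \<mu>)) \<longlonglongrightarrow> a * (pi / 2)"
            unfolding Psi_def by (intro tendsto_intros)
          then show ?thesis using True by simp
        qed simp
      qed
    qed
    have "(\<integral>\<mu>. indicator N \<mu> * (a * (pi / 2)) \<partial>(M t)) = a * (pi / 2) * measure (M t) N"
      using Nm by simp
    moreover have "(\<integral>\<mu>. indicator N \<mu> * (a * (pi / 2)) \<partial>(M t)) \<le> a * J0 a + 2 * p * d * T * (a / 2) + p * d powr (1 - p) * K"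
    proof (rule tendsto_upperbound[OF lim _ trivial_limit_sequentially], rule always_eventually, rule allI)
      fix n
      show "(\<integral>\<mu>. indicator N \<mu> * Psi a (mR p (real n + 1) \<mu>) \<partial>(M t)) \<le> a * J0 a + 2 * p * d * T * (a / 2) + p * d powr (1 - p) * K"
        using lowt[of n] ineq[of n] up0[of n] by linarith
    qed
    ultimately have "a * (pi / 2 * measure (M t) N) \<le> a * (J0 a + p * d * T + p * d powr (1 - p) * K / a)"
      using a by (simp add: algebra_simps)
    then show ?thesis using a by simp
  qed
  have J0lim: "(\<lambda>j. J0 (real j + 1)) \<longlonglongrightarrow> 0"
  proof -
    have "(\<lambda>j. \<integral>\<mu>. arctan (enn2real (Gm p \<mu>) * inverse (real j + 1)) \<partial>(M 0)) \<longlonglongrightarrow> (\<integral>\<mu>. 0 \<partial>(M 0))"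
    proof (rule integral_dominated_convergence[where w="\<lambda>_. pi / 2"])
      have gm: "Gm p \<in> borel_measurable (M 0)" using Gm_meas sM0 by (simp cong: measurable_cong_sets)
      show "(\<lambda>\<mu>. arctan (enn2real (Gm p \<mu>) * inverse (real j + 1))) \<in> borel_measurable (M 0)" for j
        using gm by measurable
      show "AE \<mu> in M 0. norm (arctan (enn2real (Gm p \<mu>) * inverse (real j + 1))) \<le> pi / 2" for j
        using arctan_ubound arctan_lbound by (intro AE_I2) (auto simp: abs_less_iff less_imp_le)
      show "AE \<mu> in M 0. (\<lambda>j. arctan (enn2real (Gm p \<mu>) * inverse (real j + 1))) \<longlonglongrightarrow> 0"
      proof (rule AE_I2)
        fix \<mu>
        have "(\<lambda>j. enn2real (Gm p \<mu>) * inverse (real j + 1)) \<longlonglongrightarrow> enn2real (Gm p \<mu>) * 0"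
          by (intro tendsto_intros tendsto_inverse_0_at_top real_Suc_at_top)
        from tendsto_arctan[OF this] show "(\<lambda>j. arctan (enn2real (Gm p \<mu>) * inverse (real j + 1))) \<longlonglongrightarrow> 0" by simp
      qed
    qed auto
    then show ?thesis by (simp add: J0_def)
  qed
  have m0: "measure (M t) N \<le> 0"
  proof (rule field_le_epsilon)
    fix e :: real assume e: "e > 0"
    define d where "d = e / (2 * p * T)"
    have d: "d > 0" using e p T by (simp add: d_def)
    have "(\<lambda>j. J0 (real j + 1) + p * d * T + p * d powr (1 - p) * K / (real j + 1)) \<longlonglongrightarrow> 0 + p * d * T + p * d powr (1 - p) * K * 0"
    proof -
      have "(\<lambda>j. p * d powr (1 - p) * K * inverse (real j + 1)) \<longlonglongrightarrow> p * d powr (1 - p) * K * 0"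
        by (intro tendsto_mult tendsto_const tendsto_inverse_0_at_top real_Suc_at_top)
      then have "(\<lambda>j. p * d powr (1 - p) * K / (real j + 1)) \<longlonglongrightarrow> p * d powr (1 - p) * K * 0"
        by (simp add: divide_inverse)
      then show ?thesis using J0lim by (intro tendsto_add tendsto_const)
    qed
    then have "pi / 2 * measure (M t) N \<le> 0 + p * d * T + p * d powr (1 - p) * K * 0"
      by (rule tendsto_lowerbound) (use key d in \<open>auto intro!: always_eventually\<close>)
    also have "\<dots> = e / 2" using p T by (simp add: d_def field_simps)
    finally have "pi / 2 * measure (M t) N \<le> e / 2" .
    moreover have "1 \<le> pi / 2" using pi_gt3 by simp
    moreover have "0 \<le> measure (M t) N" by simp
    ultimately have "1 * measure (M t) N \<le> e / 2"
      by (meson mult_right_mono order_trans)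
    then show "measure (M t) N \<le> 0 + e" using e by simp
  qed
  then have "emeasure (M t) N = 0"
    using Mt.emeasure_eq_measure[of N] measure_nonneg[of "M t" N] by simp
  then have "AE \<mu> in M t. \<mu> \<notin> N" using Nm by (intro AE_I'[of N]) auto
  then show ?thesis
  proof (rule AE_mp, intro AE_I2 impI)
    fix \<mu> assume "\<mu> \<in> space (M t)" "\<mu> \<notin> N"
    then have "Gm p \<mu> < \<infinity>" by (auto simp: N_def less_top)
    then show "pmom p \<mu> < \<infinity>" using pmom_le_Gm[OF p, of \<mu>] by (rule le_less_trans[rotated])
  qed
qed



lemma arctan_half: "0 \<le> u \<Longrightarrow> u \<le> 1 \<Longrightarrow> u / 2 \<le> arctan u"
proof -
  assume u: "0 \<le> u" "u \<le> 1"
  have "(\<lambda>x. arctan x - x / 2) 0 \<le> (\<lambda>x. arctan x - x / 2) u"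
  proof (rule DERIV_nonneg_imp_nondecreasing[OF u(1)])
    fix x :: real assume x: "0 \<le> x" "x \<le> u"
    have "x^2 \<le> 1" using x u by (intro power_le_one) auto
    moreover have "0 < 1 + x^2" by (simp add: add_pos_nonneg)
    ultimately have "inverse 2 \<le> inverse (1 + x^2)" by (intro le_imp_inverse_le) auto
    then have "1/2 \<le> inverse (1 + x^2)" by simp
    moreover have "((\<lambda>x. arctan x - x / 2) has_real_derivative inverse (1 + x^2) - 1/2) (at x)"
      by (auto intro!: derivative_eq_intros)
    ultimately show "\<exists>y. ((\<lambda>x. arctan x - x / 2) has_real_derivative y) (at x) \<and> 0 \<le> y" by force
  qed
  then show ?thesis by simp
qed

lemma Psi_lower: "a > 0 \<Longrightarrow> 0 \<le> s \<Longrightarrow> s \<le> a \<Longrightarrow> s / 2 \<le> Psi a s"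
proof -
  assume a: "a > 0" and s: "0 \<le> s" "s \<le> a"
  have "s * inverse a / 2 \<le> arctan (s * inverse a)"
    using a s by (intro arctan_half) (auto simp: field_simps)
  then have "a * (s * inverse a / 2) \<le> a * arctan (s * inverse a)" using a by simp
  moreover have "a * (s * inverse a / 2) = s / 2" using a by simp
  ultimately have "s / 2 \<le> a * arctan (s * inverse a)" by linarith
  then show ?thesis by (simp add: Psi_def)
qed

lemma Psi_upper: "a > 0 \<Longrightarrow> 0 \<le> s \<Longrightarrow> Psi a s \<le> s"
proof -
  assume a: "a > 0" and s: "0 \<le> s"
  have "arctan (s * inverse a) \<le> s * inverse a" using a s by (intro arctan_le_self) auto
  then have "a * arctan (s * inverse a) \<le> a * (s * inverse a)" using a by simp
  moreover have "a * (s * inverse a) = s" using a by simp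
  ultimately show ?thesis by (simp add: Psi_def)
qed



lemma mR_abs: "\<mu> \<in> Pd \<Longrightarrow> R > 0 \<Longrightarrow> p \<ge> 0 \<Longrightarrow> \<bar>mR p R \<mu>\<bar> \<le> 3/2 * R"
  using mR_range[of \<mu> R p] by auto

lemma part2:
  fixes p T t :: real
    and M :: "real \<Rightarrow> 'a::euclidean_space measure measure"
    and b :: "real \<Rightarrow> 'a \<Rightarrow> 'a measure \<Rightarrow> 'a"
  assumes p: "p \<ge> 1" and T: "T > 0"
    and curve: "narrow_curve T M"
    and b_meas: "(\<lambda>(t, x, \<mu>). b t x \<mu>) \<in>
        borel_measurable (restrict_space borel {0..T} \<Otimes>\<^sub>M (borel :: 'a measure) \<Otimes>\<^sub>M prob_algebra (borel :: 'a measure))"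
    and b_int: "(\<integral>\<^sup>+ t. indicator {0..T} t *
        (\<integral>\<^sup>+ \<mu>. (\<integral>\<^sup>+ x. ennreal (norm (b t x \<mu>) powr p) \<partial>\<mu>) \<partial>(M t)) \<partial>lborel) < \<infinity>"
    and CE: "\<And>k \<phi> g \<Psi> D \<eta>.
        (\<forall>i<k. C1c_grad (\<phi> i) (g i)) \<Longrightarrow> C1b_partials k \<Psi> D \<Longrightarrow> test_fun T \<eta> \<Longrightarrow>
        - (LINT t:{0<..<T}|lborel. deriv \<eta> t *
              (\<integral>\<mu>. \<Psi> (\<lambda>i. \<integral>x. \<phi> i x \<partial>\<mu>) \<partial>(M t)))
        = (LINT t:{0<..<T}|lborel. \<eta> t *
              (\<integral>\<mu>. (\<integral>x. (\<Sum>i<k. D i (\<lambda>j. \<integral>y. \<phi> j y \<partial>\<mu>) *\<^sub>R g i x) \<bullet> b t x \<mu> \<partial>\<mu>) \<partial>(M t)))"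
    and h1: "(\<integral>\<^sup>+ \<mu>. pmom p \<mu> \<partial>(M 0)) < \<infinity>"
    and t: "t \<in> {0..T}"
  shows "(\<integral>\<^sup>+ \<mu>. pmom p \<mu> \<partial>(M t)) < \<infinity>"
proof -
  define K where "K = enn2real (\<integral>\<^sup>+ t. indicator {0..T} t *
        (\<integral>\<^sup>+ \<mu>. (\<integral>\<^sup>+ x. ennreal (norm (b t x \<mu>) powr p) \<partial>\<mu>) \<partial>(M t)) \<partial>lborel)"
  have K0: "0 \<le> K" by (simp add: K_def)
  have t0: "0 \<in> {0..T}" using T by simp
  note sMt = curve_M[OF curve t]
  note sM0 = curve_M[OF curve t0]
  interpret Mt: prob_space "M t" by (rule sMt(3))
  interpret M0: prob_space "M 0" by (rule sM0(3))
  define A0 where "A0 = (\<integral>\<^sup>+ \<mu>. Gm p \<mu> \<partial>(M 0))"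
  have A0fin: "A0 < \<infinity>"
  proof -
    have pm: "pmom p \<in> borel_measurable (M 0)" using pmom_meas sM0 by (simp cong: measurable_cong_sets)
    have "A0 \<le> (\<integral>\<^sup>+ \<mu>. ennreal (2 powr (p / 2)) * (1 + pmom p \<mu>) \<partial>(M 0))"
      unfolding A0_def by (rule nn_integral_mono) (use Gm_le[OF p] sM0 in auto)
    also have "\<dots> = ennreal (2 powr (p / 2)) * (1 + (\<integral>\<^sup>+ \<mu>. pmom p \<mu> \<partial>(M 0)))"
      using pm by (simp add: nn_integral_cmult nn_integral_add M0.emeasure_space_1)
    also have "\<dots> < \<infinity>" using h1 by (simp add: ennreal_mult_less_top less_top)
    finally show ?thesis .
  qed
  define A0r where "A0r = enn2real A0"
  define d where "d = 1 / (8 * p * T)"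
  have d: "d > 0" using p T by (simp add: d_def)
  define C where "C = p * d powr (1 - p) * K"
  define B where "B = 4 * A0r + 4 * C"
  have vbound: "(\<integral>\<mu>. mR p (real n + 1) \<mu> \<partial>(M t)) \<le> B" for n :: nat
  proof -
    define R where "R = real n + 1"
    have R: "R > 0" by (simp add: R_def)
    define a where "a = 3/2 * R"
    have a: "a > 0" using R by (simp add: a_def)
    define v where "v s = (\<integral>\<mu>. mR p R \<mu> \<partial>(M s))" for s
    have intmR: "integrable (M s) (mR p R)" if "s \<in> {0..T}" for s
      by (rule int_bounded_Pd[OF curve that mR_meas[OF R], where B="3/2 * R"]) (use mR_abs[OF _ R, of _ p] p in auto)
    have vr: "0 \<le> v s \<and> v s \<le> 3/2 * R" if s: "s \<in> {0..T}" for s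
    proof -
      note sMs = curve_M[OF curve s]
      interpret Ms: prob_space "M s" by (rule sMs(3))
      have "0 \<le> v s" unfolding v_def
        by (rule integral_nonneg_AE, rule AE_I2) (use mR_range[OF _ R, of _ p] p sMs in auto)
      moreover have "v s \<le> (\<integral>\<mu>. 3/2 * R \<partial>(M s))" unfolding v_def
        by (rule integral_mono[OF intmR[OF s]]) (use mR_range[OF _ R, of _ p] p sMs in auto)
      ultimately show ?thesis by (simp add: Ms.prob_space)
    qed
    define Y where "Y = Sup (v ` {0..T})"
    have bdd: "bdd_above (v ` {0..T})" using vr by (auto intro!: bdd_aboveI[of _ "3/2 * R"])
    have vY: "v s \<le> Y" if "s \<in> {0..T}" for s unfolding Y_def using bdd that by (intro cSup_upper) auto
    have Y0: "0 \<le> Y" using vY[OF t0] vr[OF t0] by linarith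
    have nnv: "(\<integral>\<^sup>+\<mu>. ennreal (mR p R \<mu>) \<partial>(M s)) = ennreal (v s)" if s: "s \<in> {0..T}" for s
      unfolding v_def
    proof (rule nn_integral_eq_integral[OF intmR[OF s]], rule AE_I2)
      fix \<mu> assume "\<mu> \<in> space (M s)"
      then show "0 \<le> mR p R \<mu>" using mR_range[of \<mu> R p] R p curve_M[OF curve s] by auto
    qed
    have step: "v s / 2 \<le> A0r + Y / 4 + C" if s: "s \<in> {0..T}" for s
    proof -
      note sMs = curve_M[OF curve s]
      have intPsi: "integrable (M s) (\<lambda>\<mu>. Psi a (mR p R \<mu>))" if "s \<in> {0..T}" for s
        by (rule int_bounded_Pd[OF curve that Psi_meas[OF R] Psi_bound[OF a]])
      have core_i: "(\<integral>\<mu>. Psi a (mR p R \<mu>) \<partial>(M s)) - (\<integral>\<mu>. Psi a (mR p R \<mu>) \<partial>(M 0)) \<le> 2 * p * d * T * Y + C"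
        unfolding C_def K_def
      proof (rule core[OF p T a R d Y0 curve b_meas b_int CE _ s])
        fix s' assume s': "s' \<in> {0..T}"
        note sMs' = curve_M[OF curve s']
        have "(\<integral>\<^sup>+\<mu>. ennreal (Psi' a (mR p R \<mu>) * mR p R \<mu>) \<partial>(M s')) \<le> (\<integral>\<^sup>+\<mu>. ennreal (mR p R \<mu>) \<partial>(M s'))"
        proof (rule nn_integral_mono)
          fix \<mu> assume "\<mu> \<in> space (M s')"
          then have "0 \<le> mR p R \<mu>" using mR_range[of \<mu> R p] R p sMs' by auto
          then show "ennreal (Psi' a (mR p R \<mu>) * mR p R \<mu>) \<le> ennreal (mR p R \<mu>)"
            using Psi'_range[of a "mR p R \<mu>"] by (intro ennreal_leI) (simp add: mult_left_le_one_le)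
        qed
        also have "\<dots> = ennreal (v s')" by (rule nnv[OF s'])
        also have "\<dots> \<le> ennreal Y" using vY[OF s'] by (rule ennreal_leI)
        finally show "(\<integral>\<^sup>+\<mu>. ennreal (Psi' a (mR p R \<mu>) * mR p R \<mu>) \<partial>(M s')) \<le> ennreal Y" .
      qed
      have low: "v s / 2 \<le> (\<integral>\<mu>. Psi a (mR p R \<mu>) \<partial>(M s))"
      proof -
        have "v s / 2 = (\<integral>\<mu>. mR p R \<mu> / 2 \<partial>(M s))" by (simp add: v_def)
        also have "\<dots> \<le> (\<integral>\<mu>. Psi a (mR p R \<mu>) \<partial>(M s))"
        proof (rule integral_mono[OF _ intPsi[OF s]])
          show "integrable (M s) (\<lambda>\<mu>. mR p R \<mu> / 2)" using intmR[OF s] by simp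
          fix \<mu> assume "\<mu> \<in> space (M s)"
          then have "0 \<le> mR p R \<mu> \<and> mR p R \<mu> \<le> 3/2 * R" using mR_range[of \<mu> R p] R p sMs by auto
          then show "mR p R \<mu> / 2 \<le> Psi a (mR p R \<mu>)" by (intro Psi_lower[OF a]) (auto simp: a_def)
        qed
        finally show ?thesis .
      qed
      have up: "(\<integral>\<mu>. Psi a (mR p R \<mu>) \<partial>(M 0)) \<le> A0r"
      proof -
        have "(\<integral>\<mu>. Psi a (mR p R \<mu>) \<partial>(M 0)) \<le> v 0" unfolding v_def
        proof (rule integral_mono[OF intPsi[OF t0] intmR[OF t0]])
          fix \<mu> assume "\<mu> \<in> space (M 0)"
          then have "0 \<le> mR p R \<mu>" using mR_range[of \<mu> R p] R p sM0 by auto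
          then show "Psi a (mR p R \<mu>) \<le> mR p R \<mu>" by (rule Psi_upper[OF a])
        qed
        also have "v 0 \<le> A0r"
        proof -
          have "ennreal (v 0) \<le> A0"
            unfolding nnv[OF t0, symmetric] A0_def
            by (rule nn_integral_mono) (use mR_le_Gm[OF _ R p] sM0 in auto)
          then have "enn2real (ennreal (v 0)) \<le> enn2real A0" using A0fin by (intro enn2real_mono) auto
          then show ?thesis using vr[OF t0] by (simp add: A0r_def)
        qed
        finally show ?thesis .
      qed
      have "2 * p * d * T * Y = Y / 4" using p T by (simp add: d_def field_simps)
      then show ?thesis using core_i low up by linarith
    qed
    have "Y \<le> 2 * A0r + Y / 2 + 2 * C"
      unfolding Y_def
    proof (rule cSup_least)
      show "v ` {0..T} \<noteq> {}" using t0 by auto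
      fix y assume "y \<in> v ` {0..T}"
      then obtain s where "s \<in> {0..T}" "y = v s" by auto
      then show "y \<le> 2 * A0r + Sup (v ` {0..T}) / 2 + 2 * C" using step[of s] by (simp add: Y_def)
    qed
    then have "Y \<le> B" by (simp add: B_def)
    then show ?thesis using vY[OF t] by (simp add: v_def R_def)
  qed
  have "(\<integral>\<^sup>+ \<mu>. pmom p \<mu> \<partial>(M t)) \<le> (\<integral>\<^sup>+ \<mu>. Gm p \<mu> \<partial>(M t))"
    by (intro nn_integral_mono pmom_le_Gm p)
  also have "\<dots> \<le> (\<integral>\<^sup>+ \<mu>. liminf (\<lambda>n. ennreal (mR p (real n + 1) \<mu>)) \<partial>(M t))"
    by (rule nn_integral_mono) (use Gm_liminf[OF _ p] sMt in auto)
  also have "\<dots> \<le> liminf (\<lambda>n. \<integral>\<^sup>+ \<mu>. ennreal (mR p (real n + 1) \<mu>) \<partial>(M t))"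
  proof (rule nn_integral_liminf)
    fix n :: nat
    have "(\<lambda>\<mu>. ennreal (mR p (real n + 1) \<mu>)) \<in> borel_measurable (prob_algebra borel)"
      by (intro measurable_compose[OF mR_meas measurable_ennreal]) simp
    then show "(\<lambda>\<mu>. ennreal (mR p (real n + 1) \<mu>)) \<in> borel_measurable (M t)"
      using sMt by (simp cong: measurable_cong_sets)
  qed
  also have "\<dots> \<le> ennreal B"
  proof -
    have le: "(\<integral>\<^sup>+ \<mu>. ennreal (mR p (real n + 1) \<mu>) \<partial>(M t)) \<le> ennreal B" for n :: nat
    proof -
      have i: "integrable (M t) (mR p (real n + 1))"
        by (rule int_bounded_Pd[OF curve t mR_meas, where B="3/2 * (real n + 1)"])
           (use mR_abs[of _ "real n + 1" p] p in auto)
      have "(\<integral>\<^sup>+ \<mu>. ennreal (mR p (real n + 1) \<mu>) \<partial>(M t)) = ennreal (\<integral>\<mu>. mR p (real n + 1) \<mu> \<partial>(M t))"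
      proof (rule nn_integral_eq_integral[OF i], rule AE_I2)
        fix \<mu> assume "\<mu> \<in> space (M t)"
        then show "0 \<le> mR p (real n + 1) \<mu>" using mR_range[of \<mu> "real n + 1" p] p sMt by auto
      qed
      also have "\<dots> \<le> ennreal B" by (rule ennreal_leI[OF vbound])
      finally show ?thesis .
    qed
    have "liminf (\<lambda>n. \<integral>\<^sup>+ \<mu>. ennreal (mR p (real n + 1) \<mu>) \<partial>(M t)) \<le> limsup (\<lambda>n. \<integral>\<^sup>+ \<mu>. ennreal (mR p (real n + 1) \<mu>) \<partial>(M t))"
      by (rule Liminf_le_Limsup) simp
    also have "\<dots> \<le> ennreal B" by (rule Limsup_bounded) (use le in auto)
    finally show ?thesis .
  qed
  also have "\<dots> < \<infinity>" by simp
  finally show ?thesis .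
qed



theorem lemma6p1:
  fixes p T :: real
    and M :: "real \<Rightarrow> 'a::euclidean_space measure measure"
    and b :: "real \<Rightarrow> 'a \<Rightarrow> 'a measure \<Rightarrow> 'a"
  assumes p: "p \<ge> 1"
    and curve: "narrow_curve T M"
    and b_meas: "(\<lambda>(t, x, \<mu>). b t x \<mu>) \<in>
        borel_measurable (restrict_space borel {0..T} \<Otimes>\<^sub>M (borel :: 'a measure) \<Otimes>\<^sub>M prob_algebra (borel :: 'a measure))"
    and b_int: "(\<integral>\<^sup>+ t. indicator {0..T} t *
        (\<integral>\<^sup>+ \<mu>. (\<integral>\<^sup>+ x. ennreal (norm (b t x \<mu>) powr p) \<partial>\<mu>) \<partial>(M t)) \<partial>lborel) < \<infinity>"
    and CE: "\<And>k \<phi> g \<Psi> D \<eta>.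
        (\<forall>i<k. C1c_grad (\<phi> i) (g i)) \<Longrightarrow> C1b_partials k \<Psi> D \<Longrightarrow> test_fun T \<eta> \<Longrightarrow>
        - (LINT t:{0<..<T}|lborel. deriv \<eta> t *
              (\<integral>\<mu>. \<Psi> (\<lambda>i. \<integral>x. \<phi> i x \<partial>\<mu>) \<partial>(M t)))
        = (LINT t:{0<..<T}|lborel. \<eta> t *
              (\<integral>\<mu>. (\<integral>x. (\<Sum>i<k. D i (\<lambda>j. \<integral>y. \<phi> j y \<partial>\<mu>) *\<^sub>R g i x) \<bullet> b t x \<mu> \<partial>\<mu>) \<partial>(M t)))"
  shows "((AE \<mu> in M 0. pmom p \<mu> < \<infinity>) \<longrightarrow> (\<forall>t\<in>{0..T}. AE \<mu> in M t. pmom p \<mu> < \<infinity>))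
       \<and> (((AE \<mu> in M 0. pmom p \<mu> < \<infinity>) \<and> (\<integral>\<^sup>+ \<mu>. pmom p \<mu> \<partial>(M 0)) < \<infinity>) \<longrightarrow>
          (\<forall>t\<in>{0..T}. (AE \<mu> in M t. pmom p \<mu> < \<infinity>) \<and> (\<integral>\<^sup>+ \<mu>. pmom p \<mu> \<partial>(M t)) < \<infinity>))"
proof (cases "T > 0")
  case True
  show ?thesis
    using part1[OF p True curve b_meas b_int CE] part2[OF p True curve b_meas b_int CE] by blast
next
  case False
  then have z: "t \<in> {0..T} \<Longrightarrow> t = 0" for t by auto
  show ?thesis
  proof (intro conjI impI ballI)
    fix t assume h: "AE \<mu> in M 0. pmom p \<mu> < \<infinity>" and t: "t \<in> {0..T}"
    show "AE \<mu> in M t. pmom p \<mu> < \<infinity>" unfolding z[OF t] by (rule h)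
  next
    fix t assume h: "(AE \<mu> in M 0. pmom p \<mu> < \<infinity>) \<and> (\<integral>\<^sup>+ \<mu>. pmom p \<mu> \<partial>(M 0)) < \<infinity>" and t: "t \<in> {0..T}"
    show "AE \<mu> in M t. pmom p \<mu> < \<infinity>" unfolding z[OF t] using h by blast
    show "(\<integral>\<^sup>+ \<mu>. pmom p \<mu> \<partial>(M t)) < \<infinity>" unfolding z[OF t] using h by blast
  qed
qed


end
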